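(* In the setting of the context, assume $\gamma(n)\to\gamma>1$, $\delta>1$, and $F(K)=1$ for some $K<\infty$. Then there exist constants $0<C_3,C_4<\infty$ such that for $0\le\varepsilon<\frac13$, all $k\ge\frac{1+2\varepsilon}{2\log\delta}\log n$ and all sufficiently large $n$, $$\Pr\{\rho(n,k)\le(2k+1)K\mid |T'_k|\ne0,|T''_k|\ne0\}=\Pr\{\exists\text{ a conducting path between }\langle0\rangle'\text{ and }\langle0\rangle''\text{ in }N(n,k)\mid|T'_k|\ne0,|T''_k|\ne0\}\ge1-C_3n^{-C_4\varepsilon}.$$
   Context: $F$ is a distribution function on $[0,\infty)$ and $0\le\gamma(n)\le n$. Let $T',T''$ be independent, disjoint family trees of Bienaym\'e–Galton–Watson processes with $Z_0=1$ and Poisson offspring of mean $\delta$, with roots $\langle0\rangle',\langle0\rangle''$, generations $T'_k,T''_k$ and truncations $T'_{[k]},T''_{[k]}$ (generations $0,\dots,k$); every edge of $T'\cup T''$ gets an independent resistance with distribution $F$. The network $N(n,k)$ consists of $T'_{[k]}$, $T''_{[k]}$ and, for each pair $v'\in T'_k$, $v''\in T''_k$, an edge between them whose resistance has law $\Pr(\le x)=\frac{\gamma(n)}nF(x)$ ($0\le x<\infty$), $\Pr(=\infty)=1-\frac{\gamma(n)}n$, all independent of each other and of everything else. An edge or path is conducting if its resistance(s) are finite. $\rho(n,k)$ is the effective resistance between $\langle0\rangle'$ and $\langle0\rangle''$ in $N(n,k)$. *)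

theory Defs
  imports "HOL-Probability.Probability"
begin

text \<open>The effective resistance is the minimal energy of a unit flow (infinite if none exists).\<close>

definition unit_flow ::
  "'v set \<Rightarrow> 'e set \<Rightarrow> ('e \<Rightarrow> 'v \<times> 'v) \<Rightarrow> ('e \<Rightarrow> ereal) \<Rightarrow> 'v \<Rightarrow> 'v \<Rightarrow> ('e \<Rightarrow> real) \<Rightarrow> bool" where
  "unit_flow V Ed ends r a b \<theta> \<longleftrightarrow>
     (\<forall>e\<in>Ed. r e = \<infinity> \<longrightarrow> \<theta> e = 0) \<and>
     (\<forall>x\<in>V. (\<Sum>e\<in>{e\<in>Ed. fst (ends e) = x}. \<theta> e) - (\<Sum>e\<in>{e\<in>Ed. snd (ends e) = x}. \<theta> e)
             = (if x = a then 1 else if x = b then -1 else 0))"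

definition flow_energy :: "'e set \<Rightarrow> ('e \<Rightarrow> ereal) \<Rightarrow> ('e \<Rightarrow> real) \<Rightarrow> real" where
  "flow_energy Ed r \<theta> = (\<Sum>e\<in>{e\<in>Ed. r e \<noteq> \<infinity>}. real_of_ereal (r e) * (\<theta> e)\<^sup>2)"

definition eff_resistance ::
  "'v set \<Rightarrow> 'e set \<Rightarrow> ('e \<Rightarrow> 'v \<times> 'v) \<Rightarrow> ('e \<Rightarrow> ereal) \<Rightarrow> 'v \<Rightarrow> 'v \<Rightarrow> ereal" where
  "eff_resistance V Ed ends r a b =
     Inf {ereal (flow_energy Ed r \<theta>) | \<theta>. unit_flow V Ed ends r a b \<theta>}"

definition conducting_adj :: "'e set \<Rightarrow> ('e \<Rightarrow> 'v \<times> 'v) \<Rightarrow> ('e \<Rightarrow> ereal) \<Rightarrow> 'v \<Rightarrow> 'v \<Rightarrow> bool" where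
  "conducting_adj Ed ends r x y \<longleftrightarrow>
     (\<exists>e\<in>Ed. r e \<noteq> \<infinity> \<and> (ends e = (x, y) \<or> ends e = (y, x)))"

definition conducting_path :: "'e set \<Rightarrow> ('e \<Rightarrow> 'v \<times> 'v) \<Rightarrow> ('e \<Rightarrow> ereal) \<Rightarrow> 'v \<Rightarrow> 'v \<Rightarrow> bool" where
  "conducting_path Ed ends r a b \<longleftrightarrow> (conducting_adj Ed ends r)\<^sup>*\<^sup>* a b"

text \<open>Independent random coordinates (Ulam--Harris labelling of the trees by nat lists):
  Off1 v / Off2 v: number of children of vertex v in T' / T'' (Poisson(delta));
  Res1 v / Res2 v: resistance of the edge from the parent of v to v in T' / T'' (law F);
  CrossB v' v'', CrossR v' v'': the cross edge between v' and v'' has resistance CrossR v' v''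
  (law F) if CrossB v' v'' = 1 (probability gamma(n)/n) and infinite resistance otherwise;
  this gives exactly the law Pr(<= x) = gamma(n)/n F(x), Pr(= infinity) = 1 - gamma(n)/n.\<close>

datatype idx = Off1 "nat list" | Off2 "nat list" | Res1 "nat list" | Res2 "nat list"
  | CrossB "nat list" "nat list" | CrossR "nat list" "nat list"

datatype nedge = E1 "nat list" | E2 "nat list" | EC "nat list" "nat list"

definition coord_dist :: "real measure \<Rightarrow> real \<Rightarrow> real \<Rightarrow> idx \<Rightarrow> real measure" where
  "coord_dist \<mu> \<delta> p i = (case i of
       Off1 _ \<Rightarrow> measure_pmf (map_pmf real (poisson_pmf \<delta>))
     | Off2 _ \<Rightarrow> measure_pmf (map_pmf real (poisson_pmf \<delta>))
     | Res1 _ \<Rightarrow> \<mu>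
     | Res2 _ \<Rightarrow> \<mu>
     | CrossB _ _ \<Rightarrow> measure_pmf (map_pmf (\<lambda>b. if b then 1 else 0) (bernoulli_pmf p))
     | CrossR _ _ \<Rightarrow> \<mu>)"

definition netP :: "real measure \<Rightarrow> real \<Rightarrow> (nat \<Rightarrow> real) \<Rightarrow> nat \<Rightarrow> (idx \<Rightarrow> real) measure" where
  "netP \<mu> \<delta> \<gamma> n = PiM UNIV (coord_dist \<mu> \<delta> (\<gamma> n / real n))"

definition in_tree :: "(nat list \<Rightarrow> nat) \<Rightarrow> nat list \<Rightarrow> bool" where
  "in_tree off v \<longleftrightarrow> (\<forall>j<length v. v ! j < off (take j v))"

definition off1 :: "(idx \<Rightarrow> real) \<Rightarrow> nat list \<Rightarrow> nat" where
  "off1 \<omega> v = nat \<lfloor>\<omega> (Off1 v)\<rfloor>"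
definition off2 :: "(idx \<Rightarrow> real) \<Rightarrow> nat list \<Rightarrow> nat" where
  "off2 \<omega> v = nat \<lfloor>\<omega> (Off2 v)\<rfloor>"

definition gen1 :: "(idx \<Rightarrow> real) \<Rightarrow> nat \<Rightarrow> nat list set" where
  "gen1 \<omega> k = {v. in_tree (off1 \<omega>) v \<and> length v = k}"
definition gen2 :: "(idx \<Rightarrow> real) \<Rightarrow> nat \<Rightarrow> nat list set" where
  "gen2 \<omega> k = {v. in_tree (off2 \<omega>) v \<and> length v = k}"
definition trunc1 :: "(idx \<Rightarrow> real) \<Rightarrow> nat \<Rightarrow> nat list set" where
  "trunc1 \<omega> k = {v. in_tree (off1 \<omega>) v \<and> length v \<le> k}"
definition trunc2 :: "(idx \<Rightarrow> real) \<Rightarrow> nat \<Rightarrow> nat list set" where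
  "trunc2 \<omega> k = {v. in_tree (off2 \<omega>) v \<and> length v \<le> k}"

definition N_vertices :: "(idx \<Rightarrow> real) \<Rightarrow> nat \<Rightarrow> (nat list + nat list) set" where
  "N_vertices \<omega> k = Inl ` trunc1 \<omega> k \<union> Inr ` trunc2 \<omega> k"

definition N_edges :: "(idx \<Rightarrow> real) \<Rightarrow> nat \<Rightarrow> nedge set" where
  "N_edges \<omega> k = E1 ` {v\<in>trunc1 \<omega> k. v \<noteq> []} \<union> E2 ` {v\<in>trunc2 \<omega> k. v \<noteq> []}
     \<union> (\<lambda>(v', v''). EC v' v'') ` (gen1 \<omega> k \<times> gen2 \<omega> k)"

fun N_ends :: "nedge \<Rightarrow> (nat list + nat list) \<times> (nat list + nat list)" where
  "N_ends (E1 v) = (Inl (butlast v), Inl v)"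
| "N_ends (E2 v) = (Inr (butlast v), Inr v)"
| "N_ends (EC v' v'') = (Inl v', Inr v'')"

fun N_res :: "(idx \<Rightarrow> real) \<Rightarrow> nedge \<Rightarrow> ereal" where
  "N_res \<omega> (E1 v) = ereal (\<omega> (Res1 v))"
| "N_res \<omega> (E2 v) = ereal (\<omega> (Res2 v))"
| "N_res \<omega> (EC v' v'') = (if \<omega> (CrossB v' v'') = 1 then ereal (\<omega> (CrossR v' v'')) else \<infinity>)"

definition rho :: "(idx \<Rightarrow> real) \<Rightarrow> nat \<Rightarrow> ereal" where
  "rho \<omega> k = eff_resistance (N_vertices \<omega> k) (N_edges \<omega> k) N_ends (N_res \<omega>) (Inl []) (Inr [])"

definition roots_connected :: "(idx \<Rightarrow> real) \<Rightarrow> nat \<Rightarrow> bool" where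
  "roots_connected \<omega> k \<longleftrightarrow> conducting_path (N_edges \<omega> k) N_ends (N_res \<omega>) (Inl []) (Inr [])"

definition cond_pr :: "'a measure \<Rightarrow> ('a \<Rightarrow> bool) \<Rightarrow> ('a \<Rightarrow> bool) \<Rightarrow> real" where
  "cond_pr M A B = measure M {x\<in>space M. A x \<and> B x} / measure M {x\<in>space M. B x}"

end

theory Submission
  imports Defs
begin

section \<open>Deterministic tree facts\<close>

definition lev :: "(nat list \<Rightarrow> nat) \<Rightarrow> nat \<Rightarrow> nat list set" where
  "lev off k = {v. in_tree off v \<and> length v = k}"

lemma in_tree_Nil[simp]: "in_tree off []"
  by (simp add: in_tree_def)

lemma in_tree_snoc[simp]: "in_tree off (v @ [i]) \<longleftrightarrow> in_tree off v \<and> i < off v"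
  unfolding in_tree_def
  by (auto simp: nth_append less_Suc_eq)

lemma in_tree_take: "in_tree off v \<Longrightarrow> in_tree off (take j v)"
  unfolding in_tree_def by (auto simp: min_def)

lemma in_tree_butlast: "in_tree off v \<Longrightarrow> in_tree off (butlast v)"
  by (metis butlast_conv_take in_tree_take)

lemma lev_0: "lev off 0 = {[]}"
  by (auto simp: lev_def)

lemma lev_Suc: "lev off (Suc k) = (\<lambda>(v,i). v @ [i]) ` Sigma (lev off k) (\<lambda>v. {..<off v})"
proof (intro set_eqI iffI)
  fix w assume "w \<in> lev off (Suc k)"
  then have w: "in_tree off w" "length w = Suc k" by (auto simp: lev_def)
  then obtain v i where vi: "w = v @ [i]" by (metis length_Suc_conv_rev)
  with w show "w \<in> (\<lambda>(v,i). v @ [i]) ` Sigma (lev off k) (\<lambda>v. {..<off v})"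
    by (auto simp: lev_def intro!: image_eqI[of _ _ "(v,i)"])
qed (auto simp: lev_def)

lemma lev_finite: "finite (lev off k)"
  by (induction k) (auto simp: lev_0 lev_Suc)

lemma lev_card_Suc: "card (lev off (Suc k)) = (\<Sum>v\<in>lev off k. off v)"
proof -
  have "inj_on (\<lambda>(v,i). v @ [i]) (Sigma (lev off k) (\<lambda>v. {..<off v}))"
    by (auto simp: inj_on_def)
  then show ?thesis
    by (simp add: lev_Suc card_image card_SigmaI lev_finite)
qed

lemma trunc_eq: "{v. in_tree off v \<and> length v \<le> k} = (\<Union>j\<le>k. lev off j)"
  by (auto simp: lev_def)

lemma trunc_finite: "finite {v. in_tree off v \<and> length v \<le> k}"
  by (simp add: trunc_eq lev_finite)

lemma in_tree_cong: "(\<And>u. length u < length v \<Longrightarrow> off u = off' u) \<Longrightarrow> in_tree off v = in_tree off' v"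
  unfolding in_tree_def by auto

lemma lev_cong: "(\<And>u. length u < k \<Longrightarrow> off u = off' u) \<Longrightarrow> lev off k = lev off' k"
  unfolding lev_def using in_tree_cong by blast

section \<open>Generic measurability\<close>

definition offG :: "(nat list \<Rightarrow> idx) \<Rightarrow> (idx \<Rightarrow> real) \<Rightarrow> nat list \<Rightarrow> nat" where
  "offG c \<omega> v = nat \<lfloor>\<omega> (c v)\<rfloor>"

lemma off1_eq: "off1 \<omega> = offG Off1 \<omega>" and off2_eq: "off2 \<omega> = offG Off2 \<omega>"
  by (auto simp: fun_eq_iff off1_def off2_def offG_def)

lemma gen1_eq: "gen1 \<omega> k = lev (offG Off1 \<omega>) k" and gen2_eq: "gen2 \<omega> k = lev (offG Off2 \<omega>) k"
  by (auto simp: gen1_def gen2_def lev_def off1_eq off2_eq)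

definition pgf :: "real \<Rightarrow> real \<Rightarrow> real" where
  "pgf \<delta> t = exp (\<delta> * (t - 1))"

lemma pois_gf:
  assumes d: "0 < \<delta>" and t: "0 \<le> t"
  shows "(\<integral>\<^sup>+x. ennreal (t ^ nat \<lfloor>x\<rfloor>) \<partial>measure_pmf (map_pmf real (poisson_pmf \<delta>))) = ennreal (pgf \<delta> t)"
proof -
  have s: "(\<lambda>j. (\<delta> * t) ^ j / fact j * exp (-\<delta>)) sums (exp (\<delta> * t) * exp (-\<delta>))"
    using sums_mult2[OF exp_converges[of "\<delta> * t"], of "exp (-\<delta>)"] by (simp add: divide_inverse scaleR_conv_of_real mult.commute)
  have "(\<integral>\<^sup>+x. ennreal (t ^ nat \<lfloor>x\<rfloor>) \<partial>measure_pmf (map_pmf real (poisson_pmf \<delta>)))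
      = (\<integral>\<^sup>+j. ennreal (t ^ j) \<partial>measure_pmf (poisson_pmf \<delta>))"
    by (simp only: nn_integral_map_pmf) simp
  also have "\<dots> = (\<integral>\<^sup>+j. ennreal (pmf (poisson_pmf \<delta>) j) * ennreal (t ^ j) \<partial>count_space UNIV)"
    by (simp only: nn_integral_measure_pmf)
  also have "\<dots> = (\<Sum>j. ennreal ((\<delta> * t) ^ j / fact j * exp (-\<delta>)))"
    unfolding nn_integral_count_space_nat
  proof (intro suminf_cong)
    fix n
    have "ennreal (pmf (poisson_pmf \<delta>) n) * ennreal (t ^ n) = ennreal (pmf (poisson_pmf \<delta>) n * t ^ n)"
      by (rule ennreal_mult''[symmetric]) (simp add: t)
    also have "pmf (poisson_pmf \<delta>) n * t ^ n = (\<delta> * t) ^ n / fact n * exp (-\<delta>)"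
      by (simp add: d power_mult_distrib)
    finally show "ennreal (pmf (poisson_pmf \<delta>) n) * ennreal (t ^ n) = ennreal ((\<delta> * t) ^ n / fact n * exp (-\<delta>))" .
  qed
  also have "\<dots> = ennreal (exp (\<delta> * t) * exp (-\<delta>))"
    by (rule sums_unique[symmetric], rule sums_ennreal[THEN iffD2]) (use s d t in auto)
  also have "exp (\<delta> * t) * exp (-\<delta>) = pgf \<delta> t"
    by (simp add: pgf_def exp_add[symmetric] algebra_simps)
  finally show ?thesis .
qed

lemma pois_gf':
  assumes d: "0 < \<delta>" and t: "0 \<le> t"
  shows "(\<integral>\<^sup>+x. ennreal (t ^ x) \<partial>measure_pmf (poisson_pmf \<delta>)) = ennreal (pgf \<delta> t)"
  using pois_gf[OF d t] by simp

locale netgen = product_prob_space M UNIV for M :: "idx \<Rightarrow> real measure" +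
  fixes \<delta> p :: real
  assumes spM: "\<And>i. space (M i) = UNIV"
  and measM: "\<And>i. (\<lambda>x. x) \<in> measurable (M i) borel"
  and Moff1: "\<And>v. M (Off1 v) = measure_pmf (map_pmf real (poisson_pmf \<delta>))"
  and Moff2: "\<And>v. M (Off2 v) = measure_pmf (map_pmf real (poisson_pmf \<delta>))"
  and Mcb: "\<And>a b. M (CrossB a b) = measure_pmf (map_pmf (\<lambda>b. if b then 1 else 0) (bernoulli_pmf p))"
  and delta_pos: "0 < \<delta>" and p_nonneg: "0 \<le> p" and p_le1: "p \<le> 1"
begin

abbreviation "PP \<equiv> PiM UNIV M"

lemma space_PP[simp]: "space PP = UNIV"
  by (auto simp: space_PiM spM)

lemma coord_meas[measurable]: "(\<lambda>\<omega>. \<omega> i) \<in> borel_measurable PP"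
  using measurable_compose[OF measurable_component_singleton[of i UNIV M] measM[of i]] by simp

lemma offG_meas[measurable]: "(\<lambda>\<omega>. offG c \<omega> v) \<in> measurable PP (count_space UNIV)"
  unfolding offG_def by measurable

lemma in_tree_meas[measurable]: "Measurable.pred PP (\<lambda>\<omega>. in_tree (offG c \<omega>) v)"
  unfolding in_tree_def by measurable

lemma lev_eq_meas[measurable]: "Measurable.pred PP (\<lambda>\<omega>. lev (offG c \<omega>) k = A)"
proof -
  have "(\<lambda>\<omega>. lev (offG c \<omega>) k = A) = (\<lambda>\<omega>. \<forall>v. v \<in> A \<longleftrightarrow> in_tree (offG c \<omega>) v \<and> length v = k)"
    by (auto simp: lev_def fun_eq_iff)
  then show ?thesis by simp
qed


lemma indep_coords: "P.indep_vars M (\<lambda>i \<omega>. \<omega> i) UNIV"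
proof (subst P.indep_vars_iff_distr_eq_PiM)
  show "\<And>i. (\<lambda>\<omega>. \<omega> i) \<in> measurable PP (M i)" by simp
  have "distr PP PP (\<lambda>x. \<lambda>i\<in>UNIV. x i) = distr PP PP (\<lambda>x. x)"
    by (rule distr_cong) auto
  also have "\<dots> = PP" by (rule distr_id)
  also have "\<dots> = (\<Pi>\<^sub>M i\<in>UNIV. distr PP (M i) (\<lambda>\<omega>. \<omega> i))"
    by (rule PiM_cong) (auto simp: PiM_component)
  finally show "distr PP (\<Pi>\<^sub>M i\<in>UNIV. M i) (\<lambda>x. \<lambda>i\<in>UNIV. x i) = (\<Pi>\<^sub>M i\<in>UNIV. distr PP (M i) (\<lambda>\<omega>. \<omega> i))" .
qed simp

lemma id_PiM_meas: "(\<lambda>x. x) \<in> measurable (PiM A M) PP"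
proof (rule measurable_PiM_single')
  fix i :: idx
  show "(\<lambda>x. x i) \<in> measurable (PiM A M) (M i)"
  proof (cases "i \<in> A")
    case True then show ?thesis by simp
  next
    case False
    then have "(\<lambda>x. x i) \<in> measurable (PiM A M) (M i) \<longleftrightarrow> (\<lambda>x. undefined) \<in> measurable (PiM A M) (M i)"
      by (intro measurable_cong) (auto simp: space_PiM PiE_def extensional_def)
    then show ?thesis by (simp add: spM)
  qed
qed (auto simp: space_PiM spM)

definition dep_on :: "idx set \<Rightarrow> ((idx \<Rightarrow> real) \<Rightarrow> 'b) \<Rightarrow> bool" where
  "dep_on A g \<longleftrightarrow> (\<forall>\<omega> \<omega>'. (\<forall>i\<in>A. \<omega> i = \<omega>' i) \<longrightarrow> g \<omega> = g \<omega>')"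

lemma dep_on_restrict: "dep_on A g \<Longrightarrow> g (restrict \<omega> A) = g \<omega>"
  unfolding dep_on_def by auto

lemma indep_blocks:
  fixes g h :: "(idx \<Rightarrow> real) \<Rightarrow> ennreal"
  assumes AB: "A \<inter> B = {}" and g[measurable]: "g \<in> borel_measurable PP" and h[measurable]: "h \<in> borel_measurable PP"
    and dg: "dep_on A g" and dh: "dep_on B h"
  shows "(\<integral>\<^sup>+\<omega>. g \<omega> * h \<omega> \<partial>PP) = (\<integral>\<^sup>+\<omega>. g \<omega> \<partial>PP) * (\<integral>\<^sup>+\<omega>. h \<omega> \<partial>PP)"
proof -
  have iv: "P.indep_var (PiM A M) (\<lambda>\<omega>. restrict (\<lambda>i. \<omega> i) A) (PiM B M) (\<lambda>\<omega>. restrict (\<lambda>i. \<omega> i) B)"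
    by (rule P.indep_var_restrict[OF indep_coords AB]) auto
  have gm: "g \<in> borel_measurable (PiM A M)"
    using measurable_compose[OF id_PiM_meas g] by simp
  have hm: "h \<in> borel_measurable (PiM B M)"
    using measurable_compose[OF id_PiM_meas h] by simp
  have iv2: "P.indep_var borel (g \<circ> (\<lambda>\<omega>. restrict (\<lambda>i. \<omega> i) A)) borel (h \<circ> (\<lambda>\<omega>. restrict (\<lambda>i. \<omega> i) B))"
    by (rule P.indep_var_compose[OF iv gm hm])
  have eqg: "g \<circ> (\<lambda>\<omega>. restrict (\<lambda>i. \<omega> i) A) = g" using dep_on_restrict[OF dg] by (auto simp: fun_eq_iff)
  have eqh: "h \<circ> (\<lambda>\<omega>. restrict (\<lambda>i. \<omega> i) B) = h" using dep_on_restrict[OF dh] by (auto simp: fun_eq_iff)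
  from iv2 have "P.indep_vars (\<lambda>_. borel) (case_bool g h) UNIV"
    unfolding eqg eqh P.indep_var_def
    by (rule P.indep_vars_cong[THEN iffD1, rotated 3]) (auto split: bool.split)
  from P.indep_vars_nn_integral[OF _ this] show ?thesis
    by (simp add: UNIV_bool mult.commute)
qed


lemma coord_integral:
  assumes [measurable]: "\<phi> \<in> borel_measurable borel"
  shows "(\<integral>\<^sup>+\<omega>. \<phi> (\<omega> i) \<partial>PP) = (\<integral>\<^sup>+x. \<phi> x \<partial>M i)"
proof -
  have m: "\<phi> \<in> borel_measurable (M i)" using measurable_compose[OF measM[of i] assms] by simp
  have "(\<integral>\<^sup>+x. \<phi> x \<partial>M i) = (\<integral>\<^sup>+x. \<phi> x \<partial>distr PP (M i) (\<lambda>\<omega>. \<omega> i))"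
    by (simp add: PiM_component)
  also have "\<dots> = (\<integral>\<^sup>+\<omega>. \<phi> (\<omega> i) \<partial>PP)"
    by (rule nn_integral_distr) (auto simp: m)
  finally show ?thesis by simp
qed

lemma prod_integral:
  assumes "finite S" and [measurable]: "\<And>i. \<phi> i \<in> borel_measurable borel"
  shows "(\<integral>\<^sup>+\<omega>. (\<Prod>i\<in>S. \<phi> i (\<omega> i)) \<partial>PP) = (\<Prod>i\<in>S. \<integral>\<^sup>+x. \<phi> i x \<partial>M i)"
proof -
  have m: "\<And>i. \<phi> i \<in> measurable (M i) borel" using measurable_compose[OF measM assms(2)] by simp
  have iv: "P.indep_vars (\<lambda>_. borel) (\<lambda>i \<omega>. \<phi> i (\<omega> i)) S"
    using P.indep_vars_compose2[OF P.indep_vars_subset[OF indep_coords subset_UNIV] m] by simp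
  have "(\<integral>\<^sup>+\<omega>. (\<Prod>i\<in>S. \<phi> i (\<omega> i)) \<partial>PP) = (\<Prod>i\<in>S. \<integral>\<^sup>+\<omega>. \<phi> i (\<omega> i) \<partial>PP)"
    by (rule P.indep_vars_nn_integral[OF assms(1) iv]) simp
  also have "\<dots> = (\<Prod>i\<in>S. \<integral>\<^sup>+x. \<phi> i x \<partial>M i)"
    by (intro prod.cong refl coord_integral) simp
  finally show ?thesis .
qed

lemma decomp:
  fixes S :: "(idx \<Rightarrow> real) \<Rightarrow> 'c" and h :: "'c \<Rightarrow> (idx \<Rightarrow> real) \<Rightarrow> ennreal"
  assumes C: "countable C" and SC: "\<And>\<omega>. S \<omega> \<in> C"
    and Sm: "\<And>c. c \<in> C \<Longrightarrow> Measurable.pred PP (\<lambda>\<omega>. S \<omega> = c)"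
    and hm: "\<And>c. c \<in> C \<Longrightarrow> h c \<in> borel_measurable PP"
    and dS: "dep_on L S" and dh: "\<And>c. c \<in> C \<Longrightarrow> dep_on L' (h c)" and LL: "L \<inter> L' = {}"
  shows "(\<integral>\<^sup>+\<omega>. h (S \<omega>) \<omega> \<partial>PP) = (\<integral>\<^sup>+c. emeasure PP {\<omega>. S \<omega> = c} * (\<integral>\<^sup>+\<omega>. h c \<omega> \<partial>PP) \<partial>count_space C)"
proof -
  have m1: "(\<lambda>\<omega>. h c \<omega> * indicator {c} (S \<omega>)) \<in> borel_measurable PP" if "c \<in> C" for c
  proof -
    have eq: "(\<lambda>\<omega>. h c \<omega> * indicator {c} (S \<omega>)) = (\<lambda>\<omega>. h c \<omega> * indicator {\<omega>. S \<omega> = c} \<omega>)"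
      by (auto simp: fun_eq_iff split: split_indicator)
    have [measurable]: "{\<omega>. S \<omega> = c} \<in> sets PP" using Sm[OF that] by (simp add: pred_def)
    note [measurable] = hm[OF that]
    show ?thesis unfolding eq by measurable
  qed
  have "(\<integral>\<^sup>+\<omega>. h (S \<omega>) \<omega> \<partial>PP) = (\<integral>\<^sup>+\<omega>. \<integral>\<^sup>+c. h c \<omega> * indicator {S \<omega>} c \<partial>count_space C \<partial>PP)"
    by (intro nn_integral_cong, subst nn_integral_indicator_singleton) (auto simp: SC)
  also have "\<dots> = (\<integral>\<^sup>+\<omega>. \<integral>\<^sup>+c. h c \<omega> * indicator {c} (S \<omega>) \<partial>count_space C \<partial>PP)"
    by (intro nn_integral_cong) (auto split: split_indicator)
  also have "\<dots> = (\<integral>\<^sup>+c. \<integral>\<^sup>+\<omega>. h c \<omega> * indicator {c} (S \<omega>) \<partial>PP \<partial>count_space C)"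
    by (rule nn_integral_count_space_nn_integral[OF C m1])
  also have "\<dots> = (\<integral>\<^sup>+c. emeasure PP {\<omega>. S \<omega> = c} * (\<integral>\<^sup>+\<omega>. h c \<omega> \<partial>PP) \<partial>count_space C)"
  proof (intro nn_integral_cong)
    fix c assume "c \<in> space (count_space C)"
    then have c: "c \<in> C" by simp
    have set: "{\<omega>. S \<omega> = c} \<in> sets PP" using Sm[OF c] by (simp add: pred_def)
    have ind: "(\<lambda>\<omega>. indicator {c} (S \<omega>) :: ennreal) = indicator {\<omega>. S \<omega> = c}"
      by (auto simp: fun_eq_iff split: split_indicator)
    have "(\<integral>\<^sup>+\<omega>. h c \<omega> * indicator {c} (S \<omega>) \<partial>PP) = (\<integral>\<^sup>+\<omega>. indicator {\<omega>. S \<omega> = c} \<omega> * h c \<omega> \<partial>PP)"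
      by (intro nn_integral_cong) (auto split: split_indicator)
    also have "\<dots> = (\<integral>\<^sup>+\<omega>. indicator {\<omega>. S \<omega> = c} \<omega> \<partial>PP) * (\<integral>\<^sup>+\<omega>. h c \<omega> \<partial>PP)"
    proof (rule indep_blocks[OF LL _ hm[OF c] _ dh[OF c]])
      show "indicator {\<omega>. S \<omega> = c} \<in> borel_measurable PP" using set by simp
      show "dep_on L (indicator {\<omega>. S \<omega> = c} :: _ \<Rightarrow> ennreal)"
        using dS unfolding dep_on_def by (auto split: split_indicator) metis+
    qed
    also have "\<dots> = emeasure PP {\<omega>. S \<omega> = c} * (\<integral>\<^sup>+\<omega>. h c \<omega> \<partial>PP)"
      using set by simp
    finally show "(\<integral>\<^sup>+\<omega>. h c \<omega> * indicator {c} (S \<omega>) \<partial>PP) = emeasure PP {\<omega>. S \<omega> = c} * (\<integral>\<^sup>+\<omega>. h c \<omega> \<partial>PP)" .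
  qed
  finally show ?thesis .
qed


lemma off_gf:
  assumes Mc: "M i = measure_pmf (map_pmf real (poisson_pmf \<delta>))" and t: "0 \<le> t"
  shows "(\<integral>\<^sup>+\<omega>. ennreal (t ^ nat \<lfloor>\<omega> i\<rfloor>) \<partial>PP) = ennreal (pgf \<delta> t)"
  using pois_gf[OF delta_pos t] by (subst coord_integral) (auto simp: Mc)


lemma emeasure_PP_UNIV[simp]: "emeasure PP UNIV = 1"
  using P.emeasure_space_1 by simp

lemma pgf_range: "0 \<le> t \<Longrightarrow> t \<le> 1 \<Longrightarrow> 0 \<le> pgf \<delta> t \<and> pgf \<delta> t \<le> 1"
  using delta_pos by (auto simp: pgf_def mult_nonneg_nonpos)

lemma pgf_iter_range: "0 \<le> t \<Longrightarrow> t \<le> 1 \<Longrightarrow> 0 \<le> (pgf \<delta> ^^ k) t \<and> (pgf \<delta> ^^ k) t \<le> 1"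
  by (induction k) (auto simp: pgf_range)

lemma dep_lev: "dep_on (c ` {u. length u < k}) (\<lambda>\<omega>. lev (offG c \<omega>) k)"
  unfolding dep_on_def by (auto intro!: lev_cong simp: offG_def)

lemma dep_prod_off: "A \<subseteq> B \<Longrightarrow> dep_on (c ` B) (\<lambda>\<omega>. \<Prod>v\<in>A. g (offG c \<omega> v))"
  unfolding dep_on_def offG_def by (auto intro!: prod.cong)

lemma countable_lev_sets: "countable {A :: nat list set. finite A \<and> A \<subseteq> {v. length v = k}}"
  by (rule countable_subset[OF _ countable_Collect_finite]) auto

lemma gen_gf:
  assumes c: "inj c" and Mc: "\<And>v. M (c v) = measure_pmf (map_pmf real (poisson_pmf \<delta>))"
  shows "0 \<le> t \<Longrightarrow> t \<le> 1 \<Longrightarrow> (\<integral>\<^sup>+\<omega>. ennreal (t ^ card (lev (offG c \<omega>) k)) \<partial>PP) = ennreal ((pgf \<delta> ^^ k) t)"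
proof (induction k arbitrary: t)
  case 0
  then show ?case by (simp add: lev_0)
next
  case (Suc k)
  let ?C = "{A :: nat list set. finite A \<and> A \<subseteq> {v. length v = k}}"
  let ?S = "\<lambda>\<omega>. lev (offG c \<omega>) k"
  let ?L = "c ` {u. length u < k}"
  let ?L' = "c ` {v. length v = k}"
  have LL: "?L \<inter> ?L' = {}" using c by (auto simp: inj_def)
  have SC: "?S \<omega> \<in> ?C" for \<omega> using lev_finite[of "offG c \<omega>" k] by (auto simp: lev_def)
  have Sm: "Measurable.pred PP (\<lambda>\<omega>. ?S \<omega> = A)" for A by measurable
  define E where "E A = emeasure PP {\<omega>. ?S \<omega> = A}" for A
  have "(\<integral>\<^sup>+\<omega>. ennreal (t ^ card (lev (offG c \<omega>) (Suc k))) \<partial>PP)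
      = (\<integral>\<^sup>+\<omega>. (\<lambda>A \<omega>. \<Prod>v\<in>A. ennreal (t ^ offG c \<omega> v)) (?S \<omega>) \<omega> \<partial>PP)"
    using Suc.prems by (intro nn_integral_cong) (simp add: lev_card_Suc power_sum prod_ennreal)
  also have "\<dots> = (\<integral>\<^sup>+A. E A * (\<integral>\<^sup>+\<omega>. (\<Prod>v\<in>A. ennreal (t ^ offG c \<omega> v)) \<partial>PP) \<partial>count_space ?C)"
    unfolding E_def
  proof (rule decomp[OF countable_lev_sets SC Sm _ dep_lev _ LL])
    show "\<And>A. (\<lambda>\<omega>. \<Prod>v\<in>A. ennreal (t ^ offG c \<omega> v)) \<in> borel_measurable PP" by measurable
    show "\<And>A. A \<in> ?C \<Longrightarrow> dep_on ?L' (\<lambda>\<omega>. \<Prod>v\<in>A. ennreal (t ^ offG c \<omega> v))"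
      by (rule dep_prod_off) auto
  qed
  also have "\<dots> = (\<integral>\<^sup>+A. E A * ennreal (pgf \<delta> t ^ card A) \<partial>count_space ?C)"
  proof (intro nn_integral_cong)
    fix A assume "A \<in> space (count_space ?C)"
    then have A: "finite A" by simp
    have "(\<integral>\<^sup>+\<omega>. (\<Prod>v\<in>A. ennreal (t ^ offG c \<omega> v)) \<partial>PP)
        = (\<integral>\<^sup>+\<omega>. (\<Prod>i\<in>c ` A. ennreal (t ^ nat \<lfloor>\<omega> i\<rfloor>)) \<partial>PP)"
      using c by (subst prod.reindex) (auto simp: offG_def inj_on_def inj_def)
    also have "\<dots> = (\<Prod>i\<in>c ` A. \<integral>\<^sup>+x. ennreal (t ^ nat \<lfloor>x\<rfloor>) \<partial>M i)"
      by (rule prod_integral) (use A in auto)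
    also have "\<dots> = (\<Prod>i\<in>c ` A. ennreal (pgf \<delta> t))"
      using Suc.prems by (intro prod.cong refl) (auto simp: Mc pois_gf' delta_pos)
    also have "\<dots> = ennreal (pgf \<delta> t ^ card A)"
      using c Suc.prems pgf_range[of t] by (simp add: card_image inj_on_def inj_def ennreal_power)
    finally show "E A * (\<integral>\<^sup>+\<omega>. (\<Prod>v\<in>A. ennreal (t ^ offG c \<omega> v)) \<partial>PP) = E A * ennreal (pgf \<delta> t ^ card A)"
      by simp
  qed
  also have "\<dots> = (\<integral>\<^sup>+A. E A * (\<integral>\<^sup>+\<omega>. (\<lambda>A \<omega>. ennreal (pgf \<delta> t ^ card A)) A \<omega> \<partial>PP) \<partial>count_space ?C)"
    by (intro nn_integral_cong) (simp add: P.emeasure_space_1)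
  also have "\<dots> = (\<integral>\<^sup>+\<omega>. (\<lambda>A \<omega>. ennreal (pgf \<delta> t ^ card A)) (?S \<omega>) \<omega> \<partial>PP)"
    unfolding E_def
    by (rule decomp[OF countable_lev_sets SC Sm _ dep_lev _ LL, symmetric]) (auto simp: dep_on_def)
  also have "\<dots> = ennreal ((pgf \<delta> ^^ k) (pgf \<delta> t))"
    using Suc.IH[of "pgf \<delta> t"] pgf_range[OF Suc.prems] by simp
  also have "\<dots> = ennreal ((pgf \<delta> ^^ Suc k) t)"
    by (simp only: funpow_Suc_right comp_def)
  finally show ?case .
qed


lemma Z_meas[measurable]: "(\<lambda>\<omega>. card (lev (offG c \<omega>) k)) \<in> measurable PP (count_space UNIV)"
proof -
  have cnt: "countable {A :: nat list set. finite A \<and> A \<subseteq> {v. length v = k}}" by (rule countable_lev_sets)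
  have "(\<lambda>\<omega>. lev (offG c \<omega>) k) \<in> measurable PP (count_space {A :: nat list set. finite A \<and> A \<subseteq> {v. length v = k}})"
  proof (subst measurable_count_space_eq_countable[OF cnt], intro conjI ballI)
    show "(\<lambda>\<omega>. lev (offG c \<omega>) k) \<in> space PP \<rightarrow> {A. finite A \<and> A \<subseteq> {v. length v = k}}"
      using lev_finite by (auto simp: lev_def)
    fix A
    have "Measurable.pred PP (\<lambda>\<omega>. lev (offG c \<omega>) k = A)" by measurable
    then show "(\<lambda>\<omega>. lev (offG c \<omega>) k) -` {A} \<inter> space PP \<in> sets PP"
      by (simp add: pred_def vimage_def)
  qed
  then show ?thesis by (rule measurable_compose) simp
qed

lemma pred_sets_PP: "Measurable.pred PP P \<Longrightarrow> {\<omega>. P \<omega>} \<in> sets PP"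
  unfolding pred_def by simp

lemma emeasure_eq_measure_PP: "emeasure PP A = ennreal (measure PP A)"
  by (rule P.emeasure_eq_measure)

lemma prob_Z0:
  assumes c: "inj c" and Mc: "\<And>v. M (c v) = measure_pmf (map_pmf real (poisson_pmf \<delta>))"
  shows "measure PP {\<omega>. card (lev (offG c \<omega>) k) = 0} = (pgf \<delta> ^^ k) 0"
proof -
  have mA: "{\<omega>. card (lev (offG c \<omega>) k) = 0} \<in> sets PP" by (rule pred_sets_PP) measurable
  have "emeasure PP {\<omega>. card (lev (offG c \<omega>) k) = 0} = (\<integral>\<^sup>+\<omega>. ennreal (0 ^ card (lev (offG c \<omega>) k)) \<partial>PP)"
    by (subst nn_integral_indicator[symmetric, OF mA]) (auto intro!: nn_integral_cong split: split_indicator)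
  also have "\<dots> = ennreal ((pgf \<delta> ^^ k) 0)" by (rule gen_gf[OF c Mc]) auto
  finally show ?thesis using pgf_iter_range[of 0 k] by (simp add: emeasure_eq_measure_PP)
qed

lemma prob_small:
  assumes c: "inj c" and Mc: "\<And>v. M (c v) = measure_pmf (map_pmf real (poisson_pmf \<delta>))" and x: "0 < x"
  shows "measure PP {\<omega>. 1 \<le> card (lev (offG c \<omega>) k) \<and> real (card (lev (offG c \<omega>) k)) \<le> x}
     \<le> exp 1 * ((pgf \<delta> ^^ k) (exp (-1/x)) - (pgf \<delta> ^^ k) 0)"
proof -
  let ?Z = "\<lambda>\<omega>. card (lev (offG c \<omega>) k)"
  let ?A = "{\<omega>. ?Z \<omega> = 0}" and ?B = "{\<omega>. 1 \<le> ?Z \<omega> \<and> real (?Z \<omega>) \<le> x}"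
  have mA[measurable]: "?A \<in> sets PP" by (rule pred_sets_PP) measurable
  have mB[measurable]: "?B \<in> sets PP" by (rule pred_sets_PP) measurable
  let ?t = "exp (-1/x)"
  have t: "0 \<le> ?t" "?t \<le> 1" using x by auto
  have pw: "indicator ?A \<omega> + ennreal (exp (-1)) * indicator ?B \<omega> \<le> ennreal (?t ^ ?Z \<omega>)" for \<omega>
  proof (cases "?Z \<omega> = 0")
    case False
    show ?thesis
    proof (cases "real (?Z \<omega>) \<le> x")
      case True
      have "?t ^ ?Z \<omega> = exp (- real (?Z \<omega>) / x)" by (simp add: exp_of_nat_mult[symmetric])
      also have "\<dots> \<ge> exp (-1)" using True x by (simp add: field_simps)
      finally show ?thesis using False True by (simp add: indicator_def)
    qed (use False in \<open>simp add: indicator_def\<close>)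
  qed (simp add: indicator_def)
  have "emeasure PP ?A + ennreal (exp (-1)) * emeasure PP ?B
      = (\<integral>\<^sup>+\<omega>. indicator ?A \<omega> + ennreal (exp (-1)) * indicator ?B \<omega> \<partial>PP)"
  proof -
    have "(\<integral>\<^sup>+\<omega>. indicator ?A \<omega> + ennreal (exp (-1)) * indicator ?B \<omega> \<partial>PP)
       = (\<integral>\<^sup>+\<omega>. indicator ?A \<omega> \<partial>PP) + (\<integral>\<^sup>+\<omega>. ennreal (exp (-1)) * indicator ?B \<omega> \<partial>PP)"
      by (rule nn_integral_add) auto
    also have "(\<integral>\<^sup>+\<omega>. ennreal (exp (-1)) * indicator ?B \<omega> \<partial>PP) = ennreal (exp (-1)) * (\<integral>\<^sup>+\<omega>. indicator ?B \<omega> \<partial>PP)"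
      by (rule nn_integral_cmult) auto
    finally show ?thesis by (simp only: nn_integral_indicator[OF mA] nn_integral_indicator[OF mB])
  qed
  also have "\<dots> \<le> (\<integral>\<^sup>+\<omega>. ennreal (?t ^ ?Z \<omega>) \<partial>PP)"
    by (intro nn_integral_mono pw)
  also have "\<dots> = ennreal ((pgf \<delta> ^^ k) ?t)" by (rule gen_gf[OF c Mc t])
  finally have ineq: "emeasure PP ?A + ennreal (exp (-1)) * emeasure PP ?B \<le> ennreal ((pgf \<delta> ^^ k) ?t)" .
  have eq: "ennreal (measure PP ?A + exp (-1) * measure PP ?B) = ennreal (measure PP ?A) + ennreal (exp (-1)) * ennreal (measure PP ?B)"
    by (subst ennreal_plus) (auto simp: ennreal_mult)
  have "ennreal (measure PP ?A + exp (-1) * measure PP ?B) \<le> ennreal ((pgf \<delta> ^^ k) ?t)"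
    unfolding eq using ineq by (simp only: emeasure_eq_measure_PP)
  then have "measure PP ?A + exp (-1) * measure PP ?B \<le> (pgf \<delta> ^^ k) ?t"
    by (subst (asm) ennreal_le_iff) (use pgf_iter_range[OF t] in auto)
  then have "exp (-1) * measure PP ?B \<le> (pgf \<delta> ^^ k) ?t - (pgf \<delta> ^^ k) 0"
    using prob_Z0[OF c Mc, of k] by simp
  then have "exp 1 * (exp (-1) * measure PP ?B) \<le> exp 1 * ((pgf \<delta> ^^ k) ?t - (pgf \<delta> ^^ k) 0)"
    by (intro mult_left_mono) auto
  then show ?thesis by (simp add: exp_minus field_simps)
qed


lemma dep_on_mono: "dep_on A g \<Longrightarrow> A \<subseteq> B \<Longrightarrow> dep_on B g"
  unfolding dep_on_def by blast

lemma dep_on_comp: "dep_on A g \<Longrightarrow> dep_on A (\<lambda>\<omega>. F (g \<omega>))"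
  unfolding dep_on_def by metis

lemma prob_Zpos:
  assumes c: "inj c" and Mc: "\<And>v. M (c v) = measure_pmf (map_pmf real (poisson_pmf \<delta>))"
  shows "measure PP {\<omega>. card (lev (offG c \<omega>) k) \<noteq> 0} = 1 - (pgf \<delta> ^^ k) 0"
proof -
  have m: "{\<omega>. card (lev (offG c \<omega>) k) = 0} \<in> sets PP" by (rule pred_sets_PP) measurable
  have "{\<omega>. card (lev (offG c \<omega>) k) \<noteq> 0} = space PP - {\<omega>. card (lev (offG c \<omega>) k) = 0}" by auto
  then show ?thesis using P.prob_compl[OF m] prob_Z0[OF c Mc] by simp
qed

lemma both_survive:
  shows "measure PP {\<omega>. card (lev (offG Off1 \<omega>) k) \<noteq> 0 \<and> card (lev (offG Off2 \<omega>) k) \<noteq> 0} = (1 - (pgf \<delta> ^^ k) 0)\<^sup>2"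
proof -
  let ?A = "{\<omega>. card (lev (offG Off1 \<omega>) k) \<noteq> 0}" and ?B = "{\<omega>. card (lev (offG Off2 \<omega>) k) \<noteq> 0}"
  have mA: "?A \<in> sets PP" by (rule pred_sets_PP) measurable
  have mB: "?B \<in> sets PP" by (rule pred_sets_PP) measurable
  have dA: "dep_on (range Off1) (indicator ?A :: _ \<Rightarrow> ennreal)"
  proof -
    have d: "dep_on (range Off1) (\<lambda>\<omega>. lev (offG Off1 \<omega>) k)" by (rule dep_on_mono[OF dep_lev]) auto
    show ?thesis unfolding dep_on_def
    proof (intro allI impI)
      fix \<omega> \<omega>' :: "idx \<Rightarrow> real" assume "\<forall>i\<in>range Off1. \<omega> i = \<omega>' i"
      then have "lev (offG Off1 \<omega>) k = lev (offG Off1 \<omega>') k" using d unfolding dep_on_def by blast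
      then show "indicator ?A \<omega> = (indicator ?A \<omega>' :: ennreal)" by (simp add: indicator_def)
    qed
  qed
  have dB: "dep_on (range Off2) (indicator ?B :: _ \<Rightarrow> ennreal)"
  proof -
    have d: "dep_on (range Off2) (\<lambda>\<omega>. lev (offG Off2 \<omega>) k)" by (rule dep_on_mono[OF dep_lev]) auto
    show ?thesis unfolding dep_on_def
    proof (intro allI impI)
      fix \<omega> \<omega>' :: "idx \<Rightarrow> real" assume "\<forall>i\<in>range Off2. \<omega> i = \<omega>' i"
      then have "lev (offG Off2 \<omega>) k = lev (offG Off2 \<omega>') k" using d unfolding dep_on_def by blast
      then show "indicator ?B \<omega> = (indicator ?B \<omega>' :: ennreal)" by (simp add: indicator_def)
    qed
  qed
  have "emeasure PP (?A \<inter> ?B) = (\<integral>\<^sup>+\<omega>. indicator ?A \<omega> * indicator ?B \<omega> \<partial>PP)"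
    using mA mB by (simp add: indicator_inter_arith[symmetric])
  also have "\<dots> = emeasure PP ?A * emeasure PP ?B"
    by (subst indep_blocks[OF _ _ _ dA dB]) (use mA mB in auto)
  finally have "measure PP (?A \<inter> ?B) = measure PP ?A * measure PP ?B"
    by (simp add: emeasure_eq_measure_PP ennreal_mult[symmetric])
  moreover have "?A \<inter> ?B = {\<omega>. card (lev (offG Off1 \<omega>) k) \<noteq> 0 \<and> card (lev (offG Off2 \<omega>) k) \<noteq> 0}" by auto
  ultimately show ?thesis
    using prob_Zpos[of Off1 k] prob_Zpos[of Off2 k] by (simp add: Moff1 Moff2 inj_def power2_eq_square)
qed


lemma prod_indicator_ennreal: "finite I \<Longrightarrow> (\<Prod>i\<in>I. (if P i then 1 else 0 :: ennreal)) = (if \<forall>i\<in>I. P i then 1 else 0)"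
  by (induction I rule: finite_induct) auto

lemma cross_integral: "(\<integral>\<^sup>+x. (if x \<noteq> 1 then 1 else 0 :: ennreal) \<partial>M (CrossB a b)) = ennreal (1 - p)"
  using p_nonneg p_le1 by (simp add: Mcb)

lemma total_E:
  fixes S :: "(idx \<Rightarrow> real) \<Rightarrow> 'c"
  assumes C: "countable C" and SC: "\<And>\<omega>. S \<omega> \<in> C"
    and Sm: "\<And>c. c \<in> C \<Longrightarrow> Measurable.pred PP (\<lambda>\<omega>. S \<omega> = c)"
  shows "(\<integral>\<^sup>+c. emeasure PP {\<omega>. S \<omega> = c} \<partial>count_space C) = 1"
proof -
  have "(\<integral>\<^sup>+\<omega>. (\<lambda>c \<omega>. 1) (S \<omega>) \<omega> \<partial>PP) = (\<integral>\<^sup>+c. emeasure PP {\<omega>. S \<omega> = c} * (\<integral>\<^sup>+\<omega>. (\<lambda>c \<omega>. 1) c \<omega> \<partial>PP) \<partial>count_space C)"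
    by (rule decomp[OF C SC Sm, where L=UNIV and L'="{}"]) (auto simp: dep_on_def, metis ext)
  then show ?thesis by simp
qed

lemma no_cross:
  assumes x: "0 \<le> x"
  shows "measure PP {\<omega>. x < real (card (lev (offG Off1 \<omega>) k)) \<and> x < real (card (lev (offG Off2 \<omega>) k)) \<and>
            (\<forall>a\<in>lev (offG Off1 \<omega>) k. \<forall>b\<in>lev (offG Off2 \<omega>) k. \<omega> (CrossB a b) \<noteq> 1)} \<le> exp (- p * x\<^sup>2)"
proof -
  let ?C1 = "{A :: nat list set. finite A \<and> A \<subseteq> {v. length v = k}}"
  let ?C = "?C1 \<times> ?C1"
  let ?S = "\<lambda>\<omega>. (lev (offG Off1 \<omega>) k, lev (offG Off2 \<omega>) k)"
  let ?NC = "{\<omega>. x < real (card (lev (offG Off1 \<omega>) k)) \<and> x < real (card (lev (offG Off2 \<omega>) k)) \<and>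
            (\<forall>a\<in>lev (offG Off1 \<omega>) k. \<forall>b\<in>lev (offG Off2 \<omega>) k. \<omega> (CrossB a b) \<noteq> 1)}"
  define h where "h c \<omega> = ennreal (if x < real (card (fst c)) \<and> x < real (card (snd c)) then 1 else 0) *
      (\<Prod>i\<in>(\<lambda>(a,b). CrossB a b) ` (fst c \<times> snd c). (if \<omega> i \<noteq> 1 then 1 else 0 :: ennreal))" for c :: "nat list set \<times> nat list set" and \<omega> :: "idx \<Rightarrow> real"
  have C: "countable ?C" using countable_lev_sets by blast
  have SC: "?S \<omega> \<in> ?C" for \<omega> using lev_finite[of "offG Off1 \<omega>" k] lev_finite[of "offG Off2 \<omega>" k] by (auto simp: lev_def)
  have Sm: "Measurable.pred PP (\<lambda>\<omega>. ?S \<omega> = c)" for c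
  proof -
    have "(\<lambda>\<omega>. ?S \<omega> = c) = (\<lambda>\<omega>. lev (offG Off1 \<omega>) k = fst c \<and> lev (offG Off2 \<omega>) k = snd c)"
      by (cases c) auto
    then show ?thesis by simp
  qed
  have hm: "h c \<in> borel_measurable PP" for c unfolding h_def by measurable
  have dS: "dep_on (range Off1 \<union> range Off2) ?S"
    using dep_lev[of Off1 k] dep_lev[of Off2 k] unfolding dep_on_def by auto
  have dh: "dep_on (range (\<lambda>(a,b). CrossB a b)) (h c)" for c
    unfolding dep_on_def h_def by (auto intro!: prod.cong arg_cong2[where f="(*)"])
  have LL: "(range Off1 \<union> range Off2) \<inter> range (\<lambda>(a,b). CrossB a b) = {}" by auto
  have mNC: "?NC \<in> sets PP"
  proof (rule pred_sets_PP)
    have "(\<lambda>\<omega>. x < real (card (lev (offG Off1 \<omega>) k)) \<and> x < real (card (lev (offG Off2 \<omega>) k)) \<and>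
            (\<forall>a\<in>lev (offG Off1 \<omega>) k. \<forall>b\<in>lev (offG Off2 \<omega>) k. \<omega> (CrossB a b) \<noteq> 1))
        = (\<lambda>\<omega>. x < real (card (lev (offG Off1 \<omega>) k)) \<and> x < real (card (lev (offG Off2 \<omega>) k)) \<and>
            (\<forall>a b. in_tree (offG Off1 \<omega>) a \<and> length a = k \<and> in_tree (offG Off2 \<omega>) b \<and> length b = k \<longrightarrow> \<omega> (CrossB a b) \<noteq> 1))"
      by (auto simp: lev_def fun_eq_iff)
    then show "Measurable.pred PP (\<lambda>\<omega>. x < real (card (lev (offG Off1 \<omega>) k)) \<and> x < real (card (lev (offG Off2 \<omega>) k)) \<and>
            (\<forall>a\<in>lev (offG Off1 \<omega>) k. \<forall>b\<in>lev (offG Off2 \<omega>) k. \<omega> (CrossB a b) \<noteq> 1))"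
      by simp
  qed
  have injc: "inj_on (\<lambda>(a,b). CrossB a b) X" for X by (auto simp: inj_on_def)
  have "emeasure PP ?NC = (\<integral>\<^sup>+\<omega>. h (?S \<omega>) \<omega> \<partial>PP)"
  proof -
    have "indicator ?NC \<omega> = h (?S \<omega>) \<omega>" for \<omega>
      unfolding h_def using lev_finite[of "offG Off1 \<omega>" k] lev_finite[of "offG Off2 \<omega>" k]
      by (simp add: prod_indicator_ennreal indicator_def)
    then show ?thesis using mNC by (simp flip: nn_integral_indicator)
  qed
  also have "\<dots> = (\<integral>\<^sup>+c. emeasure PP {\<omega>. ?S \<omega> = c} * (\<integral>\<^sup>+\<omega>. h c \<omega> \<partial>PP) \<partial>count_space ?C)"
    by (rule decomp[OF C SC Sm hm dS dh LL])
  also have "\<dots> \<le> (\<integral>\<^sup>+c. emeasure PP {\<omega>. ?S \<omega> = c} * ennreal (exp (- p * x\<^sup>2)) \<partial>count_space ?C)"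
  proof (intro nn_integral_mono mult_left_mono)
    fix c assume "c \<in> space (count_space ?C)"
    then obtain A B where c: "c = (A, B)" "finite A" "finite B" by auto
    have "(\<integral>\<^sup>+\<omega>. h c \<omega> \<partial>PP) = ennreal (if x < real (card A) \<and> x < real (card B) then 1 else 0) *
        (\<integral>\<^sup>+\<omega>. (\<Prod>i\<in>(\<lambda>(a,b). CrossB a b) ` (A \<times> B). (if \<omega> i \<noteq> 1 then 1 else 0 :: ennreal)) \<partial>PP)"
      unfolding h_def c by (subst nn_integral_cmult) auto
    also have "(\<integral>\<^sup>+\<omega>. (\<Prod>i\<in>(\<lambda>(a,b). CrossB a b) ` (A \<times> B). (if \<omega> i \<noteq> 1 then 1 else 0 :: ennreal)) \<partial>PP)
        = (\<Prod>i\<in>(\<lambda>(a,b). CrossB a b) ` (A \<times> B). \<integral>\<^sup>+y. (if y \<noteq> 1 then 1 else 0 :: ennreal) \<partial>M i)"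
      by (rule prod_integral[where \<phi>="\<lambda>i y. (if y \<noteq> 1 then 1 else 0 :: ennreal)"]) (use c in auto)
    also have "\<dots> = (\<Prod>i\<in>(\<lambda>(a,b). CrossB a b) ` (A \<times> B). ennreal (1 - p))"
      by (intro prod.cong refl) (auto simp: cross_integral)
    also have "\<dots> = ennreal ((1 - p) ^ (card A * card B))"
      using p_le1 by (simp add: card_image[OF injc] card_cartesian_product ennreal_power)
    finally have eq: "(\<integral>\<^sup>+\<omega>. h c \<omega> \<partial>PP) = ennreal (if x < real (card A) \<and> x < real (card B) then 1 else 0) * ennreal ((1 - p) ^ (card A * card B))" .
    show "(\<integral>\<^sup>+\<omega>. h c \<omega> \<partial>PP) \<le> ennreal (exp (- p * x\<^sup>2))"
    proof (cases "x < real (card A) \<and> x < real (card B)")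
      case True
      have "(1 - p) ^ (card A * card B) \<le> exp (-p) ^ (card A * card B)"
        using p_le1 by (intro power_mono) (auto simp: exp_ge_add_one_self[of "-p", simplified] add.commute)
      also have "\<dots> = exp (- p * real (card A * card B))" by (simp add: exp_of_nat_mult[symmetric] mult.commute)
      also have "\<dots> \<le> exp (- p * x\<^sup>2)"
      proof -
        have "x\<^sup>2 \<le> real (card A) * real (card B)"
          using True x by (simp add: power2_eq_square mult_mono less_imp_le)
        then show ?thesis using p_nonneg by (simp add: mult_left_mono)
      qed
      finally show ?thesis using True by (simp add: eq ennreal_leI)
    qed (auto simp: eq)
  qed simp
  also have "\<dots> = ennreal (exp (- p * x\<^sup>2)) * (\<integral>\<^sup>+c. emeasure PP {\<omega>. ?S \<omega> = c} \<partial>count_space ?C)"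
    by (subst nn_integral_multc) (auto simp: mult.commute)
  also have "\<dots> = ennreal (exp (- p * x\<^sup>2))"
    using total_E[OF C SC Sm] by simp
  finally show ?thesis by (simp add: emeasure_eq_measure_PP)
qed

end


context
  fixes \<delta> :: real assumes d1: "1 < \<delta>"
begin

lemma dpos: "0 < \<delta>" using d1 by simp

lemma pgf_mono: "u \<le> v \<Longrightarrow> pgf \<delta> u \<le> pgf \<delta> v"
  using dpos by (simp add: pgf_def)

lemma pgf_nonneg: "0 \<le> pgf \<delta> u" by (simp add: pgf_def)

lemma pgf_one: "pgf \<delta> 1 = 1" by (simp add: pgf_def)

lemma pgf_lt1: "t < 1 \<Longrightarrow> pgf \<delta> t < 1"
  using dpos by (simp add: pgf_def mult_pos_neg)

lemma iter_mono: "u \<le> v \<Longrightarrow> (pgf \<delta> ^^ m) u \<le> (pgf \<delta> ^^ m) v"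
  by (induction m) (auto intro: pgf_mono)

lemma iter_nonneg: "0 \<le> u \<Longrightarrow> 0 \<le> (pgf \<delta> ^^ m) u"
  by (induction m) (auto simp: pgf_nonneg)

lemma iter_lt1: "t < 1 \<Longrightarrow> (pgf \<delta> ^^ m) t < 1"
  by (induction m) (auto intro: pgf_lt1)

lemma ln_strict: "ln \<delta> < \<delta> - 1"
proof -
  have s: "0 < sqrt \<delta>" "sqrt \<delta> \<noteq> 1" using d1 by auto
  have "ln \<delta> = 2 * ln (sqrt \<delta>)" using dpos by (simp add: ln_sqrt)
  also have "\<dots> \<le> 2 * (sqrt \<delta> - 1)" using ln_le_minus_one[OF s(1)] by simp
  also have "\<dots> < \<delta> - 1"
  proof -
    have "0 < (sqrt \<delta> - 1)\<^sup>2" using s by simp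
    then show ?thesis using dpos by (simp add: power2_eq_square algebra_simps)
  qed
  finally show ?thesis .
qed

definition lam :: real where "lam = \<delta> * exp (1 - \<delta>)"

lemma lam_pos: "0 < lam" using dpos by (simp add: lam_def)

lemma lam_lt1: "lam < 1"
proof -
  have "\<delta> = exp (ln \<delta>)" using dpos by simp
  also have "\<dots> < exp (\<delta> - 1)" using ln_strict by simp
  finally have "\<delta> * exp (1 - \<delta>) < exp (\<delta> - 1) * exp (1 - \<delta>)" by simp
  also have "\<dots> = 1" by (simp flip: exp_add)
  finally show ?thesis by (simp add: lam_def)
qed

lemma pgf_inv_delta: "pgf \<delta> (1/\<delta>) = lam / \<delta>"
  using dpos by (simp add: pgf_def lam_def algebra_simps)

lemma pgf_inv_delta_le: "pgf \<delta> (1/\<delta>) < 1/\<delta>"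
  using lam_lt1 dpos by (simp add: pgf_inv_delta divide_strict_right_mono)

lemma invariant: "0 \<le> u \<Longrightarrow> u \<le> 1/\<delta> \<Longrightarrow> (pgf \<delta> ^^ m) u \<le> 1/\<delta>"
proof (induction m)
  case (Suc m)
  then have "pgf \<delta> ((pgf \<delta> ^^ m) u) \<le> pgf \<delta> (1/\<delta>)" by (intro pgf_mono) auto
  then show ?case using pgf_inv_delta_le by simp
qed simp

lemma lipschitz: "0 \<le> u \<Longrightarrow> u \<le> v \<Longrightarrow> v \<le> 1/\<delta> \<Longrightarrow> pgf \<delta> v - pgf \<delta> u \<le> lam * (v - u)"
proof -
  assume uv: "0 \<le> u" "u \<le> v" "v \<le> 1/\<delta>"
  have "pgf \<delta> u = pgf \<delta> v * exp (- (\<delta> * (v - u)))"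
    by (simp add: pgf_def flip: exp_add) (simp add: algebra_simps)
  then have "pgf \<delta> v - pgf \<delta> u = pgf \<delta> v * (1 - exp (- (\<delta> * (v - u))))" by (simp add: algebra_simps)
  also have "\<dots> \<le> pgf \<delta> v * (\<delta> * (v - u))"
  proof (rule mult_left_mono)
    show "1 - exp (- (\<delta> * (v - u))) \<le> \<delta> * (v - u)" using exp_ge_add_one_self[of "- (\<delta> * (v - u))"] by simp
  qed (simp add: pgf_nonneg)
  also have "\<dots> \<le> pgf \<delta> (1/\<delta>) * (\<delta> * (v - u))"
    using uv dpos by (intro mult_right_mono pgf_mono) auto
  also have "\<dots> = lam * (v - u)" using dpos by (simp add: pgf_inv_delta)
  finally show ?thesis .
qed

lemma iter_lipschitz: "0 \<le> u \<Longrightarrow> u \<le> v \<Longrightarrow> v \<le> 1/\<delta> \<Longrightarrow> (pgf \<delta> ^^ m) v - (pgf \<delta> ^^ m) u \<le> lam ^ m * (v - u)"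
proof (induction m)
  case (Suc m)
  let ?u = "(pgf \<delta> ^^ m) u" and ?v = "(pgf \<delta> ^^ m) v"
  have "pgf \<delta> ?v - pgf \<delta> ?u \<le> lam * (?v - ?u)"
    using Suc.prems by (intro lipschitz iter_nonneg iter_mono invariant) auto
  also have "\<dots> \<le> lam * (lam ^ m * (v - u))"
    using Suc lam_pos by (intro mult_left_mono) auto
  finally show ?case by (simp add: mult_ac)
qed simp

lemma key_exp_ineq: "0 < (y::real) \<Longrightarrow> 1 / (1 - exp (- y)) \<le> 1 / y + 1"
proof -
  assume y: "0 < y"
  have e: "exp (- y) < 1" using y by simp
  have "(1 + y) * exp (- y) \<le> 1"
  proof -
    have "1 + y \<le> exp y" by (rule exp_ge_add_one_self)
    then have "(1 + y) * exp (- y) \<le> exp y * exp (- y)" by (intro mult_right_mono) auto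
    then show ?thesis by (simp flip: exp_add)
  qed
  then have "y \<le> (1 + y) * (1 - exp (- y))" by (simp add: algebra_simps)
  then show ?thesis using y e by (simp add: field_simps)
qed

lemma recip_step: "0 \<le> t \<Longrightarrow> t < 1 \<Longrightarrow> 1 / (1 - pgf \<delta> t) \<le> 1 / (\<delta> * (1 - t)) + 1"
proof -
  assume t: "0 \<le> t" "t < 1"
  have "\<delta> * (t - 1) = - (\<delta> * (1 - t))" by (simp add: algebra_simps)
  then show ?thesis using key_exp_ineq[of "\<delta> * (1 - t)"] dpos t by (simp add: pgf_def)
qed

definition DD :: real where "DD = \<delta> / (\<delta> - 1)"

lemma recip_iter: "0 \<le> t \<Longrightarrow> t < 1 \<Longrightarrow> 1 / (1 - (pgf \<delta> ^^ j) t) \<le> 1 / (\<delta> ^ j * (1 - t)) + DD"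
proof (induction j)
  case 0
  have "0 \<le> DD" using d1 by (simp add: DD_def)
  then show ?case by simp
next
  case (Suc j)
  let ?u = "(pgf \<delta> ^^ j) t"
  have u: "0 \<le> ?u" "?u < 1" using Suc.prems iter_nonneg iter_lt1 by auto
  have "1 / (1 - pgf \<delta> ?u) \<le> 1 / (\<delta> * (1 - ?u)) + 1" by (rule recip_step[OF u])
  also have "1 / (\<delta> * (1 - ?u)) = (1 / (1 - ?u)) / \<delta>" by simp
  also have "\<dots> \<le> (1 / (\<delta> ^ j * (1 - t)) + DD) / \<delta>"
    using Suc dpos by (intro divide_right_mono) auto
  also have "\<dots> + 1 = 1 / (\<delta> ^ Suc j * (1 - t)) + (DD / \<delta> + 1)"
    by (simp add: add_divide_distrib)
  also have "DD / \<delta> + 1 = DD"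
    using d1 by (simp add: DD_def field_simps)
  finally show ?case by simp
qed


lemma pgf_convex: "0 \<le> a \<Longrightarrow> a \<le> 1 \<Longrightarrow> pgf \<delta> ((1 - a) * u + a * v) \<le> (1 - a) * pgf \<delta> u + a * pgf \<delta> v"
proof -
  assume a: "0 \<le> a" "a \<le> 1"
  have "exp ((1 - a) *\<^sub>R (\<delta> * (u - 1)) + a *\<^sub>R (\<delta> * (v - 1))) \<le> (1 - a) * exp (\<delta> * (u - 1)) + a * exp (\<delta> * (v - 1))"
    by (rule convex_onD[OF exp_convex a]) auto
  moreover have "(1 - a) *\<^sub>R (\<delta> * (u - 1)) + a *\<^sub>R (\<delta> * (v - 1)) = \<delta> * (((1 - a) * u + a * v) - 1)"
    by (simp add: algebra_simps)
  ultimately show ?thesis by (simp add: pgf_def)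
qed

lemma interp: "(u::real) < v \<Longrightarrow> s = (1 - (s - u) / (v - u)) * u + ((s - u) / (v - u)) * v"
proof -
  assume uv: "u < v"
  have l: "\<And>a::real. (1 - a) * u + a * v = u + a * (v - u)" by (simp add: algebra_simps)
  have "(1 - (s - u) / (v - u)) * u + ((s - u) / (v - u)) * v = u + ((s - u) / (v - u)) * (v - u)"
    by (rule l)
  also have "\<dots> = s" using uv by simp
  finally show ?thesis by simp
qed

lemma lin_id: "(1 - (a::real)) * (u - c) + a * (b - c) = ((1 - a) * u + a * b) - c"
  by (simp add: algebra_simps)

definition bb :: real where "bb = DD / (1 + DD)"

lemma DD_pos: "0 < DD" using d1 by (simp add: DD_def)

lemma bb_lt1: "bb < 1" and bb_nonneg: "0 \<le> bb"
  using DD_pos by (auto simp: bb_def)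

lemma phase2: "\<exists>i0. \<forall>s. 0 \<le> s \<longrightarrow> s \<le> bb \<longrightarrow> (pgf \<delta> ^^ i0) s \<le> 1/\<delta>"
proof (cases "bb \<le> 1/\<delta>")
  case True
  then show ?thesis by (intro exI[of _ 0]) auto
next
  case False
  let ?u = "1/\<delta>"
  have uv: "?u < bb" using False by simp
  have upos: "0 < ?u" using dpos by simp
  have fb: "pgf \<delta> bb < bb"
  proof -
    let ?a = "(bb - ?u) / (1 - ?u)"
    have a: "0 < ?a" "?a < 1" using uv bb_lt1 by (auto simp: field_simps)
    have "pgf \<delta> bb = pgf \<delta> ((1 - ?a) * ?u + ?a * 1)"
      using interp[of ?u 1 bb] uv bb_lt1 by simp
    also have "\<dots> \<le> (1 - ?a) * pgf \<delta> ?u + ?a * pgf \<delta> 1" using a by (intro pgf_convex) auto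
    also have "\<dots> < (1 - ?a) * ?u + ?a * 1"
    proof -
      have "(1 - ?a) * pgf \<delta> ?u < (1 - ?a) * ?u"
        using a pgf_inv_delta_le by (intro mult_strict_left_mono) auto
      then show ?thesis by (simp add: pgf_one)
    qed
    also have "\<dots> = bb" using interp[of ?u 1 bb] uv bb_lt1 by simp
    finally show ?thesis .
  qed
  define c0 where "c0 = min (?u - pgf \<delta> ?u) (bb - pgf \<delta> bb)"
  have c0: "0 < c0" using fb pgf_inv_delta_le by (simp add: c0_def)
  have step: "pgf \<delta> s \<le> s - c0" if s: "?u \<le> s" "s \<le> bb" for s
  proof -
    let ?a = "(s - ?u) / (bb - ?u)"
    have a: "0 \<le> ?a" "?a \<le> 1" using s uv by (auto simp: field_simps)
    have "pgf \<delta> s = pgf \<delta> ((1 - ?a) * ?u + ?a * bb)" using interp[of ?u bb s] uv by simp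
    also have "\<dots> \<le> (1 - ?a) * pgf \<delta> ?u + ?a * pgf \<delta> bb" using a by (intro pgf_convex) auto
    also have "\<dots> \<le> (1 - ?a) * (?u - c0) + ?a * (bb - c0)"
      using a by (intro add_mono mult_left_mono) (auto simp: c0_def)
    also have "\<dots> = ((1 - ?a) * ?u + ?a * bb) - c0" by (rule lin_id)
    also have "\<dots> = s - c0" using interp[of ?u bb s] uv by simp
    finally show ?thesis .
  qed
  have ind: "(pgf \<delta> ^^ i) s \<le> max ?u (bb - real i * c0)" if "0 \<le> s" "s \<le> bb" for i s
  proof (induction i)
    case 0 then show ?case using that by simp
  next
    case (Suc i)
    let ?w = "(pgf \<delta> ^^ i) s"
    have w0: "0 \<le> ?w" using iter_nonneg that by simp
    show ?case
    proof (cases "?w \<le> ?u")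
      case True
      then have "pgf \<delta> ?w \<le> pgf \<delta> ?u" by (rule pgf_mono)
      then show ?thesis using pgf_inv_delta_le by simp
    next
      case False
      then have "?w \<le> bb - real i * c0" using Suc by simp
      moreover have "?w \<le> bb" using calculation c0 by (smt (verit) of_nat_0_le_iff mult_nonneg_nonneg)
      ultimately have "pgf \<delta> ?w \<le> bb - real (Suc i) * c0" using step[of ?w] False by (simp add: algebra_simps)
      then show ?thesis by simp
    qed
  qed
  define i0 where "i0 = nat \<lceil>bb / c0\<rceil>"
  have h0: "bb - real i0 * c0 \<le> 0"
  proof -
    have "bb / c0 \<le> real i0" unfolding i0_def by linarith
    then show ?thesis using c0 by (simp add: field_simps)
  qed
  have "max ?u (bb - real i0 * c0) = ?u" by (intro max_absorb1) (use h0 upos in linarith)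
  then show ?thesis using ind by (intro exI[of _ i0]) metis
qed


lemma phase1: "0 < x \<Longrightarrow> 1 / (1 - exp (-1/x)) \<le> \<delta> ^ j \<Longrightarrow> (pgf \<delta> ^^ j) (exp (-1/x)) \<le> bb"
proof -
  assume x: "0 < x" and j: "1 / (1 - exp (-1/x)) \<le> \<delta> ^ j"
  let ?t = "exp (-1/x)"
  have t: "0 \<le> ?t" "?t < 1" using x by auto
  have dj: "0 < \<delta> ^ j" using dpos by simp
  have "1 / (\<delta> ^ j * (1 - ?t)) \<le> 1"
    using j t dj by (simp add: field_simps)
  then have "1 / (1 - (pgf \<delta> ^^ j) ?t) \<le> 1 + DD" using recip_iter[OF t, of j] by simp
  moreover have "(pgf \<delta> ^^ j) ?t < 1" using iter_lt1 t by simp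
  ultimately have "1 \<le> (1 + DD) * (1 - (pgf \<delta> ^^ j) ?t)"
    by (simp add: field_simps)
  then show ?thesis using DD_pos by (simp add: bb_def field_simps)
qed

lemma main_bound: "\<exists>C>0. \<exists>a>0. \<forall>k x. 1 \<le> x \<longrightarrow>
   (pgf \<delta> ^^ k) (exp (-1/x)) - (pgf \<delta> ^^ k) 0 \<le> C * exp (a * (ln x - real k * ln \<delta>))"
proof -
  obtain i0 where i0: "\<And>s. 0 \<le> s \<Longrightarrow> s \<le> bb \<Longrightarrow> (pgf \<delta> ^^ i0) s \<le> 1/\<delta>" using phase2 by blast
  define L where "L = ln \<delta>"
  have L: "0 < L" using d1 by (simp add: L_def)
  define a where "a = - ln lam / L"
  have "ln lam < 0" using lam_pos lam_lt1 by simp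
  then have a: "0 < a" using L by (simp add: a_def divide_neg_pos)
  have lam_eq: "lam = exp (- a * L)" using L lam_pos by (simp add: a_def)
  define C where "C = exp (a * (ln 2 + L * (1 + real i0)))"
  have C: "0 < C" by (simp add: C_def)
  have "\<forall>k x. 1 \<le> x \<longrightarrow> (pgf \<delta> ^^ k) (exp (-1/x)) - (pgf \<delta> ^^ k) 0 \<le> C * exp (a * (ln x - real k * L))"
  proof (intro allI impI)
    fix k :: nat and x :: real assume x: "1 \<le> x"
    let ?t = "exp (-1/x)"
    have t: "0 \<le> ?t" "?t < 1" using x by auto
    define j where "j = nat \<lceil>ln (2*x) / L\<rceil>"
    have lnx: "0 < ln (2*x)" using x by simp
    have j1: "ln (2*x) \<le> real j * L"
    proof -
      have "ln (2*x) / L \<le> real j" unfolding j_def by linarith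
      then show ?thesis using L by (simp add: field_simps)
    qed
    have j2: "real j * L < ln (2*x) + L"
    proof -
      have y: "0 < ln (2*x) / L" using lnx L by simp
      have "real j = real_of_int \<lceil>ln (2*x) / L\<rceil>" unfolding j_def using y by simp
      also have "\<dots> < ln (2*x) / L + 1" using ceiling_correct[of "ln (2*x) / L"] by linarith
      finally have "real j < ln (2*x) / L + 1" .
      then show ?thesis using L by (simp add: field_simps)
    qed
    have dj: "2 * x \<le> \<delta> ^ j"
    proof -
      have "2 * x = exp (ln (2*x))" using x by simp
      also have "\<dots> \<le> exp (real j * L)" using j1 by simp
      also have "\<dots> = \<delta> ^ j" using dpos by (simp add: L_def exp_of_nat_mult)
      finally show ?thesis .
    qed
    have y0: "1 / (1 - ?t) \<le> \<delta> ^ j"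
    proof -
      have "1 / (1 - exp (- (1/x))) \<le> 1 / (1/x) + 1" using x by (intro key_exp_ineq) auto
      then show ?thesis using dj x by simp
    qed
    have diff_le1: "(pgf \<delta> ^^ k) ?t - (pgf \<delta> ^^ k) 0 \<le> 1"
      using iter_lt1[OF t(2), of k] iter_nonneg[of 0 k] by simp
    show "(pgf \<delta> ^^ k) ?t - (pgf \<delta> ^^ k) 0 \<le> C * exp (a * (ln x - real k * L))"
    proof (cases "j + i0 \<le> k")
      case True
      define m where "m = k - (i0 + j)"
      have k: "k = m + (i0 + j)" using True by (simp add: m_def)
      let ?u = "(pgf \<delta> ^^ (i0 + j)) 0" and ?v = "(pgf \<delta> ^^ (i0 + j)) ?t"
      have u0: "0 \<le> ?u" by (rule iter_nonneg) simp
      have uv: "?u \<le> ?v" by (rule iter_mono) (simp)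
      have v: "?v \<le> 1/\<delta>"
      proof -
        have "?v = (pgf \<delta> ^^ i0) ((pgf \<delta> ^^ j) ?t)" by (simp add: funpow_add)
        also have "\<dots> \<le> 1/\<delta>" using phase1[of x j] x y0 by (intro i0 iter_nonneg) auto
        finally show ?thesis .
      qed
      have "(pgf \<delta> ^^ k) ?t - (pgf \<delta> ^^ k) 0 = (pgf \<delta> ^^ m) ?v - (pgf \<delta> ^^ m) ?u"
        by (simp add: k funpow_add)
      also have "\<dots> \<le> lam ^ m * (?v - ?u)" by (rule iter_lipschitz[OF u0 uv v])
      also have "\<dots> \<le> lam ^ m * 1"
      proof (rule mult_left_mono)
        have "1/\<delta> < 1" using d1 by simp
        then show "?v - ?u \<le> 1" using v u0 by linarith
      qed (use lam_pos in simp)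
      also have "\<dots> = exp (- a * L * real m)" by (simp add: lam_eq exp_of_nat_mult[symmetric] mult.commute)
      also have "\<dots> \<le> C * exp (a * (ln x - real k * L))"
      proof -
        have "- a * L * real m \<le> a * (ln 2 + L * (1 + real i0)) + a * (ln x - real k * L)"
        proof -
          have km: "real k = real m + real i0 + real j" using k by simp
          have l2x: "ln (2*x) = ln 2 + ln x" using x by (simp add: ln_mult)
          have "0 \<le> (ln 2 + L * (1 + real i0)) + (ln x - real k * L) + L * real m"
          proof -
            have e: "(ln 2 + L * (1 + real i0)) + (ln x - real k * L) + L * real m = ln 2 + ln x + L - real j * L"
              unfolding km by (simp add: algebra_simps)
            show ?thesis unfolding e using j2 l2x by linarith
          qed
          then have "0 \<le> a * ((ln 2 + L * (1 + real i0)) + (ln x - real k * L) + L * real m)"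
            using a by simp
          then show ?thesis by (simp add: algebra_simps)
        qed
        then have "exp (- a * L * real m) \<le> exp (a * (ln 2 + L * (1 + real i0)) + a * (ln x - real k * L))" by simp
        then show ?thesis by (simp add: C_def exp_add)
      qed
      finally show ?thesis .
    next
      case False
      have "1 \<le> C * exp (a * (ln x - real k * L))"
      proof -
        have "real k + 1 \<le> real j + real i0" using False by simp
        then have kk: "(real k + 1) * L \<le> (real j + real i0) * L" using L by (intro mult_right_mono) auto
        have l2x: "ln (2*x) = ln 2 + ln x" using x by (simp add: ln_mult)
        have "0 \<le> (ln 2 + L * (1 + real i0)) + (ln x - real k * L)"
        proof -
          have e1: "(real k + 1) * L = real k * L + L" and e2: "(real j + real i0) * L = real j * L + real i0 * L"
            and e3: "L * (1 + real i0) = L + real i0 * L" by (simp_all add: algebra_simps)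
          show ?thesis using kk j2 l2x L unfolding e1 e2 e3 by linarith
        qed
        then have "0 \<le> a * ((ln 2 + L * (1 + real i0)) + (ln x - real k * L))" using a by simp
        then have "0 \<le> a * (ln 2 + L * (1 + real i0)) + a * (ln x - real k * L)" by (simp add: distrib_left)
        then have "1 \<le> exp (a * (ln 2 + L * (1 + real i0)) + a * (ln x - real k * L))" by simp
        then show ?thesis by (simp add: C_def exp_add)
      qed
      then show ?thesis using diff_le1 by linarith
    qed
  qed
  then show ?thesis using C a unfolding L_def by blast
qed

end


lemma flow_conn:
  assumes fV: "finite V" and fE: "finite Ed"
    and ends_in: "\<And>e. e \<in> Ed \<Longrightarrow> fst (ends e) \<in> V \<and> snd (ends e) \<in> V"
    and aV: "a \<in> V" and ab: "a \<noteq> b" and uf: "unit_flow V Ed ends r a b \<theta>"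
  shows "conducting_path Ed ends r a b"
proof (rule ccontr)
  assume nb: "\<not> conducting_path Ed ends r a b"
  define R where "R = conducting_adj Ed ends r"
  define S where "S = {x\<in>V. R\<^sup>*\<^sup>* a x}"
  have fS: "finite S" using fV by (simp add: S_def)
  have aS: "a \<in> S" using aV by (simp add: S_def)
  have bS: "b \<notin> S" using nb by (simp add: S_def R_def conducting_path_def)
  have zero1: "\<theta> e = 0" if e: "e \<in> Ed" "fst (ends e) \<in> S" "snd (ends e) \<notin> S" for e
  proof (rule ccontr)
    assume "\<theta> e \<noteq> 0"
    then have "r e \<noteq> \<infinity>" using uf e unfolding unit_flow_def by auto
    then have "R (fst (ends e)) (snd (ends e))" using e unfolding R_def conducting_adj_def
      by (intro bexI[of _ e]) (auto simp: prod_eq_iff)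
    then have "R\<^sup>*\<^sup>* a (snd (ends e))" using e(2) by (auto simp: S_def)
    then show False using e ends_in[OF e(1)] by (auto simp: S_def)
  qed
  have zero2: "\<theta> e = 0" if e: "e \<in> Ed" "snd (ends e) \<in> S" "fst (ends e) \<notin> S" for e
  proof (rule ccontr)
    assume "\<theta> e \<noteq> 0"
    then have "r e \<noteq> \<infinity>" using uf e unfolding unit_flow_def by auto
    then have "R (snd (ends e)) (fst (ends e))" using e unfolding R_def conducting_adj_def
      by (intro bexI[of _ e]) (auto simp: prod_eq_iff)
    then have "R\<^sup>*\<^sup>* a (fst (ends e))" using e(2) by (auto simp: S_def)
    then show False using e ends_in[OF e(1)] by (auto simp: S_def)
  qed
  have g1: "(\<Sum>x\<in>S. \<Sum>e\<in>{e\<in>Ed. fst (ends e) = x}. \<theta> e) = (\<Sum>e\<in>{e\<in>Ed. fst (ends e) \<in> S}. \<theta> e)"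
  proof -
    have "(\<Sum>x\<in>S. \<Sum>e\<in>{e \<in> {e\<in>Ed. fst (ends e) \<in> S}. fst (ends e) = x}. \<theta> e) = (\<Sum>e\<in>{e\<in>Ed. fst (ends e) \<in> S}. \<theta> e)"
      by (rule sum.group) (use fE fS in auto)
    moreover have "\<And>x. x \<in> S \<Longrightarrow> {e \<in> {e\<in>Ed. fst (ends e) \<in> S}. fst (ends e) = x} = {e\<in>Ed. fst (ends e) = x}" by auto
    ultimately show ?thesis by (metis (no_types, lifting) sum.cong)
  qed
  have g2: "(\<Sum>x\<in>S. \<Sum>e\<in>{e\<in>Ed. snd (ends e) = x}. \<theta> e) = (\<Sum>e\<in>{e\<in>Ed. snd (ends e) \<in> S}. \<theta> e)"
  proof -
    have "(\<Sum>x\<in>S. \<Sum>e\<in>{e \<in> {e\<in>Ed. snd (ends e) \<in> S}. snd (ends e) = x}. \<theta> e) = (\<Sum>e\<in>{e\<in>Ed. snd (ends e) \<in> S}. \<theta> e)"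
      by (rule sum.group) (use fE fS in auto)
    moreover have "\<And>x. x \<in> S \<Longrightarrow> {e \<in> {e\<in>Ed. snd (ends e) \<in> S}. snd (ends e) = x} = {e\<in>Ed. snd (ends e) = x}" by auto
    ultimately show ?thesis by (metis (no_types, lifting) sum.cong)
  qed
  have h1: "(\<Sum>e\<in>{e\<in>Ed. fst (ends e) \<in> S}. \<theta> e) = (\<Sum>e\<in>{e\<in>Ed. fst (ends e) \<in> S \<and> snd (ends e) \<in> S}. \<theta> e)"
    by (rule sum.mono_neutral_right) (use fE zero1 in auto)
  have h2: "(\<Sum>e\<in>{e\<in>Ed. snd (ends e) \<in> S}. \<theta> e) = (\<Sum>e\<in>{e\<in>Ed. fst (ends e) \<in> S \<and> snd (ends e) \<in> S}. \<theta> e)"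
    by (rule sum.mono_neutral_right) (use fE zero2 in auto)
  have "(\<Sum>x\<in>S. (\<Sum>e\<in>{e\<in>Ed. fst (ends e) = x}. \<theta> e) - (\<Sum>e\<in>{e\<in>Ed. snd (ends e) = x}. \<theta> e)) = 0"
    by (simp add: sum_subtractf g1 g2 h1 h2)
  moreover have "(\<Sum>x\<in>S. (\<Sum>e\<in>{e\<in>Ed. fst (ends e) = x}. \<theta> e) - (\<Sum>e\<in>{e\<in>Ed. snd (ends e) = x}. \<theta> e))
      = (\<Sum>x\<in>S. (if x = a then 1 else if x = b then -1 else 0))"
    using uf unfolding unit_flow_def by (intro sum.cong) (auto simp: S_def)
  moreover have "(\<Sum>x\<in>S. (if x = a then 1 else if x = b then -1 else 0 :: real)) = 1"
  proof -
    have "(\<Sum>x\<in>S. (if x = a then 1 else if x = b then -1 else 0 :: real)) = (\<Sum>x\<in>S. (if x = a then 1 else 0))"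
      using bS by (intro sum.cong) auto
    also have "\<dots> = 1" using fS aS by (simp add: sum.delta)
    finally show ?thesis .
  qed
  ultimately show False by simp
qed

lemma path_flow_div:
  fixes pe :: "nat \<Rightarrow> 'e" and pv :: "nat \<Rightarrow> 'v" and s :: "nat \<Rightarrow> real"
  assumes fE: "finite Ed" and inj: "inj_on pe {..<n}" and sub: "pe ` {..<n} \<subseteq> Ed"
    and orient: "\<And>i. i < n \<Longrightarrow> (s i = 1 \<and> ends (pe i) = (pv i, pv (Suc i))) \<or> (s i = -1 \<and> ends (pe i) = (pv (Suc i), pv i))"
    and th: "\<And>e. \<theta> e = (if e \<in> pe ` {..<n} then s (the_inv_into {..<n} pe e) else 0)"
  shows "(\<Sum>e\<in>{e\<in>Ed. fst (ends e) = x}. \<theta> e) - (\<Sum>e\<in>{e\<in>Ed. snd (ends e) = x}. \<theta> e)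
       = (if pv 0 = x then 1 else 0) - (if pv n = x then 1 else 0)"
proof -
  have thi: "\<theta> (pe i) = s i" if "i < n" for i
    using that inj by (simp add: th the_inv_into_f_f)
  have fst_sum: "(\<Sum>e\<in>{e\<in>Ed. P e}. \<theta> e) = (\<Sum>i<n. if P (pe i) then s i else 0)" for P
  proof -
    have "(\<Sum>e\<in>{e\<in>Ed. P e}. \<theta> e) = (\<Sum>e\<in>{e\<in>pe ` {..<n}. P e}. \<theta> e)"
      by (rule sum.mono_neutral_right) (use fE sub th in auto)
    also have "\<dots> = (\<Sum>e\<in>pe ` {..<n}. if P e then \<theta> e else 0)"
      by (simp add: sum.inter_filter)
    also have "\<dots> = (\<Sum>i<n. if P (pe i) then \<theta> (pe i) else 0)"
      by (subst sum.reindex[OF inj]) simp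
    also have "\<dots> = (\<Sum>i<n. if P (pe i) then s i else 0)"
      by (intro sum.cong) (auto simp: thi)
    finally show ?thesis .
  qed
  have "(\<Sum>e\<in>{e\<in>Ed. fst (ends e) = x}. \<theta> e) - (\<Sum>e\<in>{e\<in>Ed. snd (ends e) = x}. \<theta> e)
      = (\<Sum>i<n. (if fst (ends (pe i)) = x then s i else 0) - (if snd (ends (pe i)) = x then s i else 0))"
    by (simp add: fst_sum sum_subtractf)
  also have "\<dots> = (\<Sum>i<n. (if pv i = x then 1 else 0) - (if pv (Suc i) = x then 1 else 0))"
  proof (intro sum.cong refl)
    fix i assume "i \<in> {..<n}"
    then have "i < n" by simp
    from orient[OF this] show "(if fst (ends (pe i)) = x then s i else 0) - (if snd (ends (pe i)) = x then s i else 0)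
        = (if pv i = x then 1 else 0) - (if pv (Suc i) = x then 1 else (0::real))"
      by (elim disjE conjE) simp_all
  qed
  also have "\<dots> = (if pv 0 = x then 1 else 0) - (if pv n = x then 1 else 0)"
    by (rule sum_lessThan_telescope')
  finally show ?thesis .
qed


lemma path_flow_energy:
  fixes pe :: "nat \<Rightarrow> 'e" and s :: "nat \<Rightarrow> real"
  assumes fE: "finite Ed" and inj: "inj_on pe {..<n}" and sub: "pe ` {..<n} \<subseteq> Ed"
    and sgn: "\<And>i. i < n \<Longrightarrow> s i = 1 \<or> s i = -1"
    and th: "\<And>e. \<theta> e = (if e \<in> pe ` {..<n} then s (the_inv_into {..<n} pe e) else 0)"
    and rK: "\<And>i. i < n \<Longrightarrow> r (pe i) \<noteq> \<infinity> \<and> real_of_ereal (r (pe i)) \<le> K"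
  shows "flow_energy Ed r \<theta> \<le> real n * K"
proof -
  have thi: "\<theta> (pe i) = s i" if "i < n" for i
    using that inj by (simp add: th the_inv_into_f_f)
  have "flow_energy Ed r \<theta> = (\<Sum>e\<in>pe ` {..<n}. real_of_ereal (r e) * (\<theta> e)\<^sup>2)"
    unfolding flow_energy_def
    by (rule sum.mono_neutral_right) (use fE sub th rK in auto)
  also have "\<dots> = (\<Sum>i<n. real_of_ereal (r (pe i)) * (\<theta> (pe i))\<^sup>2)"
    by (subst sum.reindex[OF inj]) simp
  also have "\<dots> = (\<Sum>i<n. real_of_ereal (r (pe i)))"
    by (intro sum.cong refl) (use thi sgn in force)
  also have "\<dots> \<le> (\<Sum>i<n. K)" by (intro sum_mono) (use rK in auto)
  finally show ?thesis by simp
qed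

section \<open>The concrete network\<close>

lemma trunc1_eq: "trunc1 \<omega> k = (\<Union>j\<le>k. lev (offG Off1 \<omega>) j)"
  by (auto simp: trunc1_def lev_def off1_eq)
lemma trunc2_eq: "trunc2 \<omega> k = (\<Union>j\<le>k. lev (offG Off2 \<omega>) j)"
  by (auto simp: trunc2_def lev_def off2_eq)

lemma finite_trunc1: "finite (trunc1 \<omega> k)" by (simp add: trunc1_eq lev_finite)
lemma finite_trunc2: "finite (trunc2 \<omega> k)" by (simp add: trunc2_eq lev_finite)
lemma finite_gen1: "finite (gen1 \<omega> k)" by (simp add: gen1_eq lev_finite)
lemma finite_gen2: "finite (gen2 \<omega> k)" by (simp add: gen2_eq lev_finite)

lemma finite_V: "finite (N_vertices \<omega> k)"
  by (simp add: N_vertices_def finite_trunc1 finite_trunc2)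

lemma finite_Ed: "finite (N_edges \<omega> k)"
  by (simp add: N_edges_def finite_trunc1 finite_trunc2 finite_gen1 finite_gen2)

lemma gen1_sub: "gen1 \<omega> k \<subseteq> trunc1 \<omega> k" by (auto simp: gen1_def trunc1_def)
lemma gen2_sub: "gen2 \<omega> k \<subseteq> trunc2 \<omega> k" by (auto simp: gen2_def trunc2_def)

lemma ends_in_V: "e \<in> N_edges \<omega> k \<Longrightarrow> fst (N_ends e) \<in> N_vertices \<omega> k \<and> snd (N_ends e) \<in> N_vertices \<omega> k"
  unfolding N_edges_def N_vertices_def
  by (auto simp: trunc1_def trunc2_def gen1_def gen2_def in_tree_butlast)

lemma root_V: "Inl [] \<in> N_vertices \<omega> k"
  by (auto simp: N_vertices_def trunc1_def)

lemma conn_cross: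
  assumes "roots_connected \<omega> k"
  shows "\<exists>a\<in>gen1 \<omega> k. \<exists>b\<in>gen2 \<omega> k. \<omega> (CrossB a b) = 1"
proof -
  let ?R = "conducting_adj (N_edges \<omega> k) N_ends (N_res \<omega>)"
  have "?R\<^sup>*\<^sup>* x y \<Longrightarrow> isl x \<Longrightarrow> isl y \<or> (\<exists>a\<in>gen1 \<omega> k. \<exists>b\<in>gen2 \<omega> k. \<omega> (CrossB a b) = 1)" for x y
  proof (induction rule: rtranclp_induct)
    case (step y z)
    show ?case
    proof (cases "isl y \<and> \<not> isl z")
      case True
      from step(2) obtain e where e: "e \<in> N_edges \<omega> k" "N_res \<omega> e \<noteq> \<infinity>" "N_ends e = (y, z) \<or> N_ends e = (z, y)"
        unfolding conducting_adj_def by blast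
      show ?thesis
      proof (cases e)
        case (E1 v) then show ?thesis using e True by auto
      next
        case (E2 v) then show ?thesis using e True by auto
      next
        case (EC a b)
        then have "a \<in> gen1 \<omega> k" "b \<in> gen2 \<omega> k" using e(1) by (auto simp: N_edges_def)
        moreover have "\<omega> (CrossB a b) = 1" using e(2) EC by (auto split: if_splits)
        ultimately show ?thesis by blast
      qed
    qed (use step in auto)
  qed simp
  from this[of "Inl []" "Inr []"] assms show ?thesis by (simp add: roots_connected_def conducting_path_def)
qed

lemma path_left: "in_tree (off1 \<omega>) v \<Longrightarrow> length v \<le> k \<Longrightarrow>
   (conducting_adj (N_edges \<omega> k) N_ends (N_res \<omega>))\<^sup>*\<^sup>* (Inl []) (Inl v)"
proof (induction v rule: rev_induct)
  case (snoc i v)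
  have "E1 (v @ [i]) \<in> N_edges \<omega> k" using snoc.prems by (auto simp: N_edges_def trunc1_def)
  then have "conducting_adj (N_edges \<omega> k) N_ends (N_res \<omega>) (Inl v) (Inl (v @ [i]))"
    unfolding conducting_adj_def by (intro bexI[of _ "E1 (v @ [i])"]) auto
  with snoc show ?case by (auto intro: rtranclp.rtrancl_into_rtrancl)
qed simp

lemma path_right: "in_tree (off2 \<omega>) v \<Longrightarrow> length v \<le> k \<Longrightarrow>
   (conducting_adj (N_edges \<omega> k) N_ends (N_res \<omega>))\<^sup>*\<^sup>* (Inr v) (Inr [])"
proof (induction v rule: rev_induct)
  case (snoc i v)
  have "E2 (v @ [i]) \<in> N_edges \<omega> k" using snoc.prems by (auto simp: N_edges_def trunc2_def)
  then have "conducting_adj (N_edges \<omega> k) N_ends (N_res \<omega>) (Inr (v @ [i])) (Inr v)"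
    unfolding conducting_adj_def by (intro bexI[of _ "E2 (v @ [i])"]) auto
  with snoc show ?case by (auto intro: converse_rtranclp_into_rtranclp)
qed simp

lemma cross_conn:
  assumes a: "a \<in> gen1 \<omega> k" and b: "b \<in> gen2 \<omega> k" and c: "\<omega> (CrossB a b) = 1"
  shows "roots_connected \<omega> k"
proof -
  let ?R = "conducting_adj (N_edges \<omega> k) N_ends (N_res \<omega>)"
  have "?R (Inl a) (Inr b)"
    unfolding conducting_adj_def using a b c by (intro bexI[of _ "EC a b"]) (auto simp: N_edges_def)
  moreover have "?R\<^sup>*\<^sup>* (Inl []) (Inl a)" using a by (intro path_left) (auto simp: gen1_def)
  moreover have "?R\<^sup>*\<^sup>* (Inr b) (Inr [])" using b by (intro path_right) (auto simp: gen2_def)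
  ultimately show ?thesis unfolding roots_connected_def conducting_path_def
    by (meson rtranclp.rtrancl_into_rtrancl rtranclp_trans)
qed

lemma rho_conn:
  assumes "rho \<omega> k \<le> ereal c"
  shows "roots_connected \<omega> k"
proof -
  have "\<exists>\<theta>. unit_flow (N_vertices \<omega> k) (N_edges \<omega> k) N_ends (N_res \<omega>) (Inl []) (Inr []) \<theta>"
  proof (rule ccontr)
    assume "\<not> ?thesis"
    then have "rho \<omega> k = \<infinity>" by (simp add: rho_def eff_resistance_def top_ereal_def)
    then show False using assms by simp
  qed
  then obtain \<theta> where uf: "unit_flow (N_vertices \<omega> k) (N_edges \<omega> k) N_ends (N_res \<omega>) (Inl []) (Inr []) \<theta>" by blast
  have ne: "Inl [] \<noteq> (Inr [] :: nat list + nat list)" by simp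
  show ?thesis unfolding roots_connected_def
    by (rule flow_conn[OF finite_V finite_Ed ends_in_V root_V ne uf])
qed


lemma rho_bound:
  assumes a: "a \<in> gen1 \<omega> k" and b: "b \<in> gen2 \<omega> k" and c: "\<omega> (CrossB a b) = 1"
    and g1: "\<And>v. \<omega> (Res1 v) \<le> K" and g2: "\<And>v. \<omega> (Res2 v) \<le> K" and g3: "\<And>a b. \<omega> (CrossR a b) \<le> K"
  shows "rho \<omega> k \<le> ereal ((2 * real k + 1) * K)"
proof -
  have la: "length a = k" and ta: "in_tree (off1 \<omega>) a" using a by (auto simp: gen1_def)
  have lb: "length b = k" and tb: "in_tree (off2 \<omega>) b" using b by (auto simp: gen2_def)
  define n where "n = 2 * k + 1"
  define pv where "pv i = (if i \<le> k then Inl (take i a) else Inr (take (2 * k + 1 - i) b))" for i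
  define pe where "pe i = (if i < k then E1 (take (Suc i) a) else if i = k then EC a b else E2 (take (2 * k + 1 - i) b))" for i
  define s where "s i = (if i \<le> k then 1 else - 1 :: real)" for i
  define \<theta> where "\<theta> e = (if e \<in> pe ` {..<n} then s (the_inv_into {..<n} pe e) else 0)" for e
  let ?V = "N_vertices \<omega> k" and ?E = "N_edges \<omega> k" and ?r = "N_res \<omega>"
  have inj: "inj_on pe {..<n}"
  proof (rule inj_onI)
    fix i j assume i: "i \<in> {..<n}" and j: "j \<in> {..<n}" and eq: "pe i = pe j"
    show "i = j"
    proof (cases "i < k")
      case True
      then show ?thesis using eq j la unfolding pe_def n_def
        by (auto split: if_splits dest!: arg_cong[where f=length])
    next
      case False
      then show ?thesis using eq i j la lb unfolding pe_def n_def
        by (auto split: if_splits dest!: arg_cong[where f=length])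
    qed
  qed
  have sub: "pe ` {..<n} \<subseteq> ?E"
  proof
    fix e assume "e \<in> pe ` {..<n}"
    then obtain i where i: "i < n" and e: "e = pe i" by auto
    show "e \<in> ?E"
    proof (cases "i < k")
      case True
      have "take (Suc i) a \<in> trunc1 \<omega> k" "take (Suc i) a \<noteq> []"
        using True la ta in_tree_take by (auto simp: trunc1_def)
      then show ?thesis using True e by (auto simp: pe_def N_edges_def)
    next
      case False
      show ?thesis
      proof (cases "i = k")
        case True then show ?thesis using e a b by (auto simp: pe_def N_edges_def)
      next
        case False2: False
        have "take (2 * k + 1 - i) b \<in> trunc2 \<omega> k" "take (2 * k + 1 - i) b \<noteq> []"
          using False False2 i lb tb in_tree_take by (auto simp: trunc2_def n_def)
        then show ?thesis using False False2 e by (auto simp: pe_def N_edges_def)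
      qed
    qed
  qed
  have orient: "(s i = 1 \<and> N_ends (pe i) = (pv i, pv (Suc i))) \<or> (s i = -1 \<and> N_ends (pe i) = (pv (Suc i), pv i))"
    if i: "i < n" for i
  proof (cases "i < k")
    case True
    then show ?thesis using la by (simp add: s_def pe_def pv_def butlast_take)
  next
    case False
    show ?thesis
    proof (cases "i = k")
      case True then show ?thesis using la lb by (simp add: s_def pe_def pv_def)
    next
      case False2: False
      then have "2 * k + 1 - i \<le> length b" "2 * k + 1 - Suc i = 2 * k + 1 - i - 1" using False i lb by (auto simp: n_def)
      then show ?thesis using False False2 i by (simp add: s_def pe_def pv_def butlast_take n_def)
    qed
  qed
  have rfin: "?r (pe i) \<noteq> \<infinity> \<and> real_of_ereal (?r (pe i)) \<le> K" if "i < n" for i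
    using c g1 g2 g3 by (auto simp: pe_def)
  have uf: "unit_flow ?V ?E N_ends ?r (Inl []) (Inr []) \<theta>"
    unfolding unit_flow_def
  proof (intro conjI ballI impI)
    fix e assume "e \<in> ?E" "?r e = \<infinity>"
    then show "\<theta> e = 0" using rfin by (auto simp: \<theta>_def)
  next
    fix x assume "x \<in> ?V"
    have "(\<Sum>e\<in>{e\<in>?E. fst (N_ends e) = x}. \<theta> e) - (\<Sum>e\<in>{e\<in>?E. snd (N_ends e) = x}. \<theta> e)
       = (if pv 0 = x then 1 else 0) - (if pv n = x then 1 else 0)"
      by (rule path_flow_div[OF finite_Ed inj sub orient]) (simp_all add: \<theta>_def)
    also have "pv 0 = Inl []" by (simp add: pv_def)
    also have "pv n = Inr []" by (simp add: pv_def n_def)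
    finally show "(\<Sum>e\<in>{e\<in>?E. fst (N_ends e) = x}. \<theta> e) - (\<Sum>e\<in>{e\<in>?E. snd (N_ends e) = x}. \<theta> e)
       = (if x = Inl [] then 1 else if x = Inr [] then -1 else 0)" by auto
  qed
  have en: "flow_energy ?E ?r \<theta> \<le> real n * K"
  proof (rule path_flow_energy[where pe=pe and s=s])
    show "\<And>i. i < n \<Longrightarrow> s i = 1 \<or> s i = -1" by (simp add: s_def)
  qed (use finite_Ed inj sub rfin in \<open>simp_all add: \<theta>_def\<close>)
  have "rho \<omega> k \<le> ereal (flow_energy ?E ?r \<theta>)"
    unfolding rho_def eff_resistance_def by (rule Inf_lower) (use uf in blast)
  also have "\<dots> \<le> ereal ((2 * real k + 1) * K)" using en by (simp add: n_def add.commute)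
  finally show ?thesis .
qed



instance idx :: countable by countable_datatype

definition Vs :: "nat list set \<Rightarrow> nat list set \<Rightarrow> (nat list + nat list) set" where
  "Vs T1 T2 = Inl ` T1 \<union> Inr ` T2"

definition Es :: "nat \<Rightarrow> nat list set \<Rightarrow> nat list set \<Rightarrow> nedge set" where
  "Es k T1 T2 = E1 ` {v\<in>T1. v \<noteq> []} \<union> E2 ` {v\<in>T2. v \<noteq> []}
     \<union> (\<lambda>(v', v''). EC v' v'') ` ({v\<in>T1. length v = k} \<times> {v\<in>T2. length v = k})"

definition Dset :: "(idx \<Rightarrow> real) \<Rightarrow> nat \<Rightarrow> (nat list \<times> nat list) set" where
  "Dset \<omega> k = {(a, b). a \<in> gen1 \<omega> k \<and> b \<in> gen2 \<omega> k \<and> \<omega> (CrossB a b) = 1}"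

fun rs :: "(nat list \<times> nat list) set \<Rightarrow> nedge \<Rightarrow> ereal" where
  "rs D (EC a b) = (if (a, b) \<in> D then 0 else \<infinity>)"
| "rs D _ = 0"

fun rcoord :: "nedge \<Rightarrow> idx" where
  "rcoord (E1 v) = Res1 v"
| "rcoord (E2 v) = Res2 v"
| "rcoord (EC a b) = CrossR a b"

definition En :: "nedge set \<Rightarrow> (nat list \<times> nat list) set \<Rightarrow> (nedge \<Rightarrow> real) \<Rightarrow> (idx \<Rightarrow> real) \<Rightarrow> real" where
  "En Ed D \<theta> \<omega> = (\<Sum>e\<in>{e\<in>Ed. rs D e \<noteq> \<infinity>}. \<omega> (rcoord e) * (\<theta> e)\<^sup>2)"

lemma gen1_trunc: "gen1 \<omega> k = {v\<in>trunc1 \<omega> k. length v = k}"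
  by (auto simp: gen1_def trunc1_def)
lemma gen2_trunc: "gen2 \<omega> k = {v\<in>trunc2 \<omega> k. length v = k}"
  by (auto simp: gen2_def trunc2_def)

lemma V_eq: "N_vertices \<omega> k = Vs (trunc1 \<omega> k) (trunc2 \<omega> k)"
  by (simp add: N_vertices_def Vs_def)

lemma E_eq: "N_edges \<omega> k = Es k (trunc1 \<omega> k) (trunc2 \<omega> k)"
  by (simp add: N_edges_def Es_def gen1_trunc gen2_trunc)

lemma inf_iff: "e \<in> N_edges \<omega> k \<Longrightarrow> (N_res \<omega> e = \<infinity>) \<longleftrightarrow> (rs (Dset \<omega> k) e = \<infinity>)"
  by (cases e) (auto simp: N_edges_def Dset_def)

lemma uf_eq: "unit_flow (N_vertices \<omega> k) (N_edges \<omega> k) N_ends (N_res \<omega>) x y \<theta>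
   = unit_flow (Vs (trunc1 \<omega> k) (trunc2 \<omega> k)) (Es k (trunc1 \<omega> k) (trunc2 \<omega> k)) N_ends (rs (Dset \<omega> k)) x y \<theta>"
  unfolding unit_flow_def V_eq[symmetric] E_eq[symmetric] using inf_iff by blast

lemma energy_eq: "flow_energy (N_edges \<omega> k) (N_res \<omega>) \<theta> = En (Es k (trunc1 \<omega> k) (trunc2 \<omega> k)) (Dset \<omega> k) \<theta> \<omega>"
proof -
  have s: "{e\<in>N_edges \<omega> k. N_res \<omega> e \<noteq> \<infinity>} = {e\<in>N_edges \<omega> k. rs (Dset \<omega> k) e \<noteq> \<infinity>}"
    using inf_iff by blast
  have "flow_energy (N_edges \<omega> k) (N_res \<omega>) \<theta> = (\<Sum>e\<in>{e\<in>N_edges \<omega> k. rs (Dset \<omega> k) e \<noteq> \<infinity>}. \<omega> (rcoord e) * (\<theta> e)\<^sup>2)"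
    unfolding flow_energy_def s
  proof (intro sum.cong refl)
    fix e assume "e \<in> {e\<in>N_edges \<omega> k. rs (Dset \<omega> k) e \<noteq> \<infinity>}"
    then show "real_of_ereal (N_res \<omega> e) * (\<theta> e)\<^sup>2 = \<omega> (rcoord e) * (\<theta> e)\<^sup>2"
      by (cases e) (auto simp: Dset_def)
  qed
  then show ?thesis by (simp add: En_def E_eq)
qed

lemma rho_char: "rho \<omega> k \<le> ereal c \<longleftrightarrow> (\<forall>m::nat. \<exists>\<theta>.
    unit_flow (Vs (trunc1 \<omega> k) (trunc2 \<omega> k)) (Es k (trunc1 \<omega> k) (trunc2 \<omega> k)) N_ends (rs (Dset \<omega> k)) (Inl []) (Inr []) \<theta>
    \<and> En (Es k (trunc1 \<omega> k) (trunc2 \<omega> k)) (Dset \<omega> k) \<theta> \<omega> < c + 1 / Suc m)"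
  (is "_ \<longleftrightarrow> (\<forall>m. \<exists>\<theta>. ?U \<theta> \<and> ?E \<theta> < c + 1 / Suc m)")
proof -
  have rho: "rho \<omega> k = Inf {ereal (?E \<theta>) | \<theta>. ?U \<theta>}"
    by (simp add: rho_def eff_resistance_def uf_eq energy_eq)
  show ?thesis
  proof
    assume le: "rho \<omega> k \<le> ereal c"
    show "\<forall>m. \<exists>\<theta>. ?U \<theta> \<and> ?E \<theta> < c + 1 / Suc m"
    proof
      fix m :: nat
      have "ereal c < ereal (c + 1 / Suc m)" by simp
      from le_less_trans[OF le[unfolded rho] this] have "Inf {ereal (?E \<theta>) | \<theta>. ?U \<theta>} < ereal (c + 1 / Suc m)" .
      then obtain z where "z \<in> {ereal (?E \<theta>) | \<theta>. ?U \<theta>}" "z < ereal (c + 1 / Suc m)"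
        by (auto simp: Inf_less_iff)
      then show "\<exists>\<theta>. ?U \<theta> \<and> ?E \<theta> < c + 1 / Suc m" by auto
    qed
  next
    assume H: "\<forall>m. \<exists>\<theta>. ?U \<theta> \<and> ?E \<theta> < c + 1 / Suc m"
    show "rho \<omega> k \<le> ereal c" unfolding rho Inf_le_iff
    proof (intro allI impI)
      fix y :: ereal assume y: "ereal c < y"
      show "\<exists>a\<in>{ereal (?E \<theta>) | \<theta>. ?U \<theta>}. y > a"
      proof (cases y)
        case (real r)
        then have "0 < r - c" using y by simp
        then obtain m :: nat where m: "1 / Suc m < r - c"
          by (metis add.commute add_less_cancel_right diff_add_cancel nat_approx_posE one_divide_eq_0_iff order_less_le_trans)
        from H obtain \<theta> where "?U \<theta>" "?E \<theta> < c + 1 / Suc m" by blast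
        then show ?thesis using m real by (intro bexI[of _ "ereal (?E \<theta>)"]) auto
      next
        case PInf
        from H obtain \<theta> where "?U \<theta>" "?E \<theta> < c + 1 / Suc 0" by blast
        then show ?thesis using PInf by (intro bexI[of _ "ereal (?E \<theta>)"]) auto
      next
        case MInf then show ?thesis using y by simp
      qed
    qed
  qed
qed

context netgen begin

lemma open_sets_PP: "open S \<Longrightarrow> S \<in> sets PP"
proof -
  assume "open S"
  then have "S \<in> sets (PiM UNIV (\<lambda>i::idx. borel :: real measure))"
    by (simp add: sets_PiM_equal_borel)
  moreover have "(\<lambda>x. x) \<in> measurable PP (PiM UNIV (\<lambda>i::idx. borel :: real measure))"
    by (rule measurable_PiM_single') (auto simp: space_PiM)
  ultimately have "(\<lambda>x. x) -` S \<inter> space PP \<in> sets PP" by (rule measurable_sets[rotated])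
  then show ?thesis by simp
qed

lemma En_open: "open {\<omega>. \<exists>\<theta>. U \<theta> \<and> En Ed D \<theta> \<omega> < c}"
proof -
  have "{\<omega>. \<exists>\<theta>. U \<theta> \<and> En Ed D \<theta> \<omega> < c} = (\<Union>\<theta>\<in>{\<theta>. U \<theta>}. {\<omega>. En Ed D \<theta> \<omega> < c})" by auto
  moreover have "open {\<omega>. En Ed D \<theta> \<omega> < c}" for \<theta>
    unfolding En_def by (intro open_Collect_less continuous_intros) auto
  ultimately show ?thesis by auto
qed

lemma rho_pred: "Measurable.pred PP (\<lambda>\<omega>. rho \<omega> k \<le> ereal c)"
proof -
  let ?Sig = "{T :: nat list set. finite T} \<times> {T :: nat list set. finite T} \<times> {D :: (nat list \<times> nat list) set. finite D}"
  let ?st = "\<lambda>\<omega>. (trunc1 \<omega> k, trunc2 \<omega> k, Dset \<omega> k)"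
  let ?Q = "\<lambda>\<sigma> \<omega>. \<forall>m::nat. \<exists>\<theta>. unit_flow (Vs (fst \<sigma>) (fst (snd \<sigma>))) (Es k (fst \<sigma>) (fst (snd \<sigma>))) N_ends (rs (snd (snd \<sigma>))) (Inl []) (Inr []) \<theta>
    \<and> En (Es k (fst \<sigma>) (fst (snd \<sigma>))) (snd (snd \<sigma>)) \<theta> \<omega> < c + 1 / Suc m"
  have cnt: "countable ?Sig"
    by (intro countable_SIGMA) (simp_all add: countable_Collect_finite)
  have finD: "finite (Dset \<omega> k)" for \<omega>
    by (rule finite_subset[of _ "gen1 \<omega> k \<times> gen2 \<omega> k"]) (auto simp: Dset_def finite_gen1 finite_gen2)
  have eq: "(\<lambda>\<omega>. rho \<omega> k \<le> ereal c) = (\<lambda>\<omega>. \<exists>\<sigma>\<in>?Sig. ?st \<omega> = \<sigma> \<and> ?Q \<sigma> \<omega>)"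
  proof (rule ext)
    fix \<omega>
    have "?st \<omega> \<in> ?Sig" using finite_trunc1 finite_trunc2 finD by auto
    then show "(rho \<omega> k \<le> ereal c) = (\<exists>\<sigma>\<in>?Sig. ?st \<omega> = \<sigma> \<and> ?Q \<sigma> \<omega>)"
      unfolding rho_char by auto
  qed
  have st_meas: "Measurable.pred PP (\<lambda>\<omega>. ?st \<omega> = \<sigma>)" for \<sigma>
  proof -
    obtain T1 T2 D where \<sigma>: "\<sigma> = (T1, T2, D)" by (cases \<sigma>) auto
    have "(\<lambda>\<omega>. ?st \<omega> = \<sigma>) = (\<lambda>\<omega>. (\<forall>v. v \<in> T1 \<longleftrightarrow> in_tree (offG Off1 \<omega>) v \<and> length v \<le> k)
       \<and> (\<forall>v. v \<in> T2 \<longleftrightarrow> in_tree (offG Off2 \<omega>) v \<and> length v \<le> k)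
       \<and> (\<forall>a b. (a, b) \<in> D \<longleftrightarrow> (in_tree (offG Off1 \<omega>) a \<and> length a = k \<and> in_tree (offG Off2 \<omega>) b \<and> length b = k \<and> \<omega> (CrossB a b) = 1)))"
      unfolding \<sigma> by (auto simp: fun_eq_iff trunc1_def trunc2_def Dset_def gen1_def gen2_def off1_eq off2_eq)
    then show ?thesis by simp
  qed
  have Q_meas: "Measurable.pred PP (?Q \<sigma>)" for \<sigma>
  proof -
    have "Measurable.pred PP (\<lambda>\<omega>. \<exists>\<theta>. unit_flow (Vs (fst \<sigma>) (fst (snd \<sigma>))) (Es k (fst \<sigma>) (fst (snd \<sigma>))) N_ends (rs (snd (snd \<sigma>))) (Inl []) (Inr []) \<theta>
    \<and> En (Es k (fst \<sigma>) (fst (snd \<sigma>))) (snd (snd \<sigma>)) \<theta> \<omega> < c + 1 / Suc m)" for m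
      unfolding pred_def using open_sets_PP[OF En_open] by simp
    then show ?thesis by measurable
  qed
  show ?thesis unfolding eq
    by (rule measurable_pred_countable(2)[OF cnt]) (use st_meas Q_meas in measurable)
qed

end


lemma conn_iff: "roots_connected \<omega> k \<longleftrightarrow> (\<exists>a b. a \<in> gen1 \<omega> k \<and> b \<in> gen2 \<omega> k \<and> \<omega> (CrossB a b) = 1)"
  using conn_cross cross_conn by blast

lemma B_iff: "(gen1 \<omega> k \<noteq> {} \<and> gen2 \<omega> k \<noteq> {}) \<longleftrightarrow>
   (card (lev (offG Off1 \<omega>) k) \<noteq> 0 \<and> card (lev (offG Off2 \<omega>) k) \<noteq> 0)"
  by (simp add: gen1_eq gen2_eq lev_finite)

context netgen begin

lemma conn_pred[measurable]: "Measurable.pred PP (\<lambda>\<omega>. roots_connected \<omega> k)"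
proof -
  have "(\<lambda>\<omega>. roots_connected \<omega> k) = (\<lambda>\<omega>. \<exists>a b. (in_tree (offG Off1 \<omega>) a \<and> length a = k) \<and> (in_tree (offG Off2 \<omega>) b \<and> length b = k) \<and> \<omega> (CrossB a b) = 1)"
    by (simp add: fun_eq_iff conn_iff gen1_def gen2_def off1_eq off2_eq)
  then show ?thesis by simp
qed

lemma B_pred[measurable]: "Measurable.pred PP (\<lambda>\<omega>. gen1 \<omega> k \<noteq> {} \<and> gen2 \<omega> k \<noteq> {})"
  unfolding B_iff by measurable

lemma prob_B:
  assumes d1: "1 < \<delta>"
  shows "measure PP {\<omega>. gen1 \<omega> k \<noteq> {} \<and> gen2 \<omega> k \<noteq> {}} \<ge> (1 - 1/\<delta>)\<^sup>2"
proof -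
  have "measure PP {\<omega>. gen1 \<omega> k \<noteq> {} \<and> gen2 \<omega> k \<noteq> {}} = (1 - (pgf \<delta> ^^ k) 0)\<^sup>2"
    unfolding B_iff by (rule both_survive)
  moreover have "(pgf \<delta> ^^ k) 0 \<le> 1/\<delta>" using invariant[OF d1, of 0 k] d1 by simp
  moreover have "0 \<le> 1 - 1/\<delta>" using d1 by simp
  ultimately show ?thesis by (simp add: power_mono)
qed

lemma prob_bad:
  assumes d1: "1 < \<delta>" and x: "0 < x"
  shows "measure PP {\<omega>. \<not> roots_connected \<omega> k \<and> (gen1 \<omega> k \<noteq> {} \<and> gen2 \<omega> k \<noteq> {})}
     \<le> 2 * (exp 1 * ((pgf \<delta> ^^ k) (exp (-1/x)) - (pgf \<delta> ^^ k) 0)) + exp (- p * x\<^sup>2)"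
proof -
  let ?Z1 = "\<lambda>\<omega>. card (lev (offG Off1 \<omega>) k)" and ?Z2 = "\<lambda>\<omega>. card (lev (offG Off2 \<omega>) k)"
  let ?A1 = "{\<omega>. 1 \<le> ?Z1 \<omega> \<and> real (?Z1 \<omega>) \<le> x}" and ?A2 = "{\<omega>. 1 \<le> ?Z2 \<omega> \<and> real (?Z2 \<omega>) \<le> x}"
  let ?NC = "{\<omega>. x < real (?Z1 \<omega>) \<and> x < real (?Z2 \<omega>) \<and>
            (\<forall>a\<in>lev (offG Off1 \<omega>) k. \<forall>b\<in>lev (offG Off2 \<omega>) k. \<omega> (CrossB a b) \<noteq> 1)}"
  have m1: "?A1 \<in> sets PP" by (rule pred_sets_PP) measurable
  have m2: "?A2 \<in> sets PP" by (rule pred_sets_PP) measurable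
  have m3: "?NC \<in> sets PP"
  proof (rule pred_sets_PP)
    have "(\<lambda>\<omega>. x < real (?Z1 \<omega>) \<and> x < real (?Z2 \<omega>) \<and>
            (\<forall>a\<in>lev (offG Off1 \<omega>) k. \<forall>b\<in>lev (offG Off2 \<omega>) k. \<omega> (CrossB a b) \<noteq> 1))
        = (\<lambda>\<omega>. x < real (?Z1 \<omega>) \<and> x < real (?Z2 \<omega>) \<and>
            (\<forall>a b. in_tree (offG Off1 \<omega>) a \<and> length a = k \<and> in_tree (offG Off2 \<omega>) b \<and> length b = k \<longrightarrow> \<omega> (CrossB a b) \<noteq> 1))"
      by (auto simp: lev_def fun_eq_iff)
    then show "Measurable.pred PP (\<lambda>\<omega>. x < real (?Z1 \<omega>) \<and> x < real (?Z2 \<omega>) \<and>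
            (\<forall>a\<in>lev (offG Off1 \<omega>) k. \<forall>b\<in>lev (offG Off2 \<omega>) k. \<omega> (CrossB a b) \<noteq> 1))" by simp
  qed
  have sub: "{\<omega>. \<not> roots_connected \<omega> k \<and> (gen1 \<omega> k \<noteq> {} \<and> gen2 \<omega> k \<noteq> {})} \<subseteq> ?A1 \<union> ?A2 \<union> ?NC"
  proof
    fix \<omega> assume "\<omega> \<in> {\<omega>. \<not> roots_connected \<omega> k \<and> (gen1 \<omega> k \<noteq> {} \<and> gen2 \<omega> k \<noteq> {})}"
    then have nc: "\<not> roots_connected \<omega> k" and z: "?Z1 \<omega> \<noteq> 0" "?Z2 \<omega> \<noteq> 0" using B_iff by auto
    have "\<forall>a\<in>lev (offG Off1 \<omega>) k. \<forall>b\<in>lev (offG Off2 \<omega>) k. \<omega> (CrossB a b) \<noteq> 1"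
      using nc cross_conn by (auto simp: gen1_eq gen2_eq)
    then show "\<omega> \<in> ?A1 \<union> ?A2 \<union> ?NC" using z by auto
  qed
  have "measure PP {\<omega>. \<not> roots_connected \<omega> k \<and> (gen1 \<omega> k \<noteq> {} \<and> gen2 \<omega> k \<noteq> {})} \<le> measure PP (?A1 \<union> ?A2 \<union> ?NC)"
    using m1 m2 m3 by (intro P.finite_measure_mono[OF sub]) auto
  also have "\<dots> \<le> measure PP (?A1 \<union> ?A2) + measure PP ?NC"
    using m1 m2 m3 by (intro measure_Un_le) auto
  also have "\<dots> \<le> measure PP ?A1 + measure PP ?A2 + measure PP ?NC"
    using m1 m2 measure_Un_le[of ?A1 PP ?A2] by simp
  also have "\<dots> \<le> exp 1 * ((pgf \<delta> ^^ k) (exp (-1/x)) - (pgf \<delta> ^^ k) 0) + exp 1 * ((pgf \<delta> ^^ k) (exp (-1/x)) - (pgf \<delta> ^^ k) 0) + exp (- p * x\<^sup>2)"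
    using prob_small[of Off1 x k] prob_small[of Off2 x k] no_cross[of x k] x
    by (intro add_mono) (auto simp: Moff1 Moff2 inj_def)
  finally show ?thesis by simp
qed

end



lemma pps_inst:
  assumes mu: "prob_space \<mu>"
  shows "product_prob_space (coord_dist \<mu> \<delta> p)"
proof -
  have pr: "prob_space (coord_dist \<mu> \<delta> p i)" for i
    by (cases i) (auto simp: coord_dist_def mu prob_space_measure_pmf)
  interpret prob_space "coord_dist \<mu> \<delta> p i" for i by (rule pr)
  show ?thesis by unfold_locales
qed



lemma netgen_inst:
  assumes mu: "prob_space \<mu>" and ms: "sets \<mu> = sets borel" and d: "0 < \<delta>" and p: "0 \<le> p" "p \<le> 1"
  shows "netgen (coord_dist \<mu> \<delta> p) \<delta> p"
proof -
  have sp: "\<And>i. space (coord_dist \<mu> \<delta> p i) = UNIV"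
  proof -
    fix i show "space (coord_dist \<mu> \<delta> p i) = UNIV"
      using sets_eq_imp_space_eq[OF ms] by (cases i) (simp_all add: coord_dist_def)
  qed
  have mm: "\<And>i. (\<lambda>x. x) \<in> measurable (coord_dist \<mu> \<delta> p i) borel"
  proof -
    fix i show "(\<lambda>x. x) \<in> measurable (coord_dist \<mu> \<delta> p i) borel"
      by (cases i) (simp_all add: coord_dist_def measurable_cong_sets[OF ms refl])
  qed
  have o1: "\<And>v. coord_dist \<mu> \<delta> p (Off1 v) = measure_pmf (map_pmf real (poisson_pmf \<delta>))"
    by (simp add: coord_dist_def)
  have o2: "\<And>v. coord_dist \<mu> \<delta> p (Off2 v) = measure_pmf (map_pmf real (poisson_pmf \<delta>))"
    by (simp add: coord_dist_def)
  have o3: "\<And>a b. coord_dist \<mu> \<delta> p (CrossB a b) = measure_pmf (map_pmf (\<lambda>b. if b then 1 else 0) (bernoulli_pmf p))"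
    by (simp add: coord_dist_def)
  have ax: "netgen_axioms (coord_dist \<mu> \<delta> p) \<delta> p"
    by (rule netgen_axioms.intro[OF sp mm o1 o2 o3 d p])
  show ?thesis
    by (rule netgen.intro[OF pps_inst[OF mu] ax])
qed



lemma pps_prob: "product_prob_space M \<Longrightarrow> prob_space (PiM UNIV M)"
proof -
  assume "product_prob_space M"
  then interpret product_prob_space M UNIV .
  show ?thesis by (rule P.prob_space_axioms)
qed

lemma exp_neg_le_inv: "0 < (y::real) \<Longrightarrow> exp (- y) \<le> 1 / y"
proof -
  assume y: "0 < y"
  have "y \<le> exp y" using exp_ge_add_one_self[of y] by linarith
  then show ?thesis using y by (simp add: exp_minus field_simps)
qed

lemma final_analysis:
  fixes n :: nat and \<epsilon> a C x \<delta> :: real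
  assumes n: "1 \<le> n" and eps: "0 \<le> \<epsilon>" and a: "0 < a" and d1: "1 < \<delta>"
    and k: "real k \<ge> (1 + 2*\<epsilon>) / (2 * ln \<delta>) * ln (real n)"
    and x: "x = real n powr ((1 + \<epsilon>) / 2)"
  shows "exp (a * (ln x - real k * ln \<delta>)) \<le> real n powr (- (a / 2 * \<epsilon>))"
proof -
  have n0: "0 < real n" using n by simp
  have L: "0 < ln \<delta>" using d1 by simp
  have lx: "ln x = (1 + \<epsilon>) / 2 * ln (real n)" using n0 by (simp add: x ln_powr)
  have "(1 + 2*\<epsilon>) / 2 * ln (real n) \<le> real k * ln \<delta>"
  proof -
    have "(1 + 2*\<epsilon>) / (2 * ln \<delta>) * ln (real n) * ln \<delta> \<le> real k * ln \<delta>"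
      using k L by (intro mult_right_mono) auto
    moreover have "(1 + 2*\<epsilon>) / (2 * ln \<delta>) * ln (real n) * ln \<delta> = (1 + 2*\<epsilon>) / 2 * ln (real n)"
      using L by (simp add: field_simps)
    ultimately show ?thesis by simp
  qed
  then have "a * (ln x - real k * ln \<delta>) \<le> a * (- (\<epsilon> / 2 * ln (real n)))"
    using a lx by (intro mult_left_mono) (auto simp: field_simps)
  then have "exp (a * (ln x - real k * ln \<delta>)) \<le> exp (- (a / 2 * \<epsilon>) * ln (real n))"
    by (simp add: algebra_simps)
  also have "\<dots> = real n powr (- (a / 2 * \<epsilon>))" using n0 by (simp add: powr_def)
  finally show ?thesis .
qed

lemma final_cross:
  fixes n :: nat and \<epsilon> p x :: real
  assumes n: "1 \<le> n" and eps: "0 \<le> \<epsilon>" and p: "1 / real n \<le> p"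
    and x: "x = real n powr ((1 + \<epsilon>) / 2)"
  shows "exp (- p * x\<^sup>2) \<le> real n powr (- \<epsilon>)"
proof -
  have n0: "0 < real n" using n by simp
  have x2: "x\<^sup>2 = real n powr (1 + \<epsilon>)"
    using n0 by (simp add: x power2_eq_square powr_add[symmetric])
  have "real n powr \<epsilon> = 1 / real n * real n powr (1 + \<epsilon>)"
    using n0 by (simp add: powr_add)
  also have "\<dots> \<le> p * x\<^sup>2" unfolding x2 using p by (intro mult_right_mono) auto
  finally have "real n powr \<epsilon> \<le> p * x\<^sup>2" .
  then have "exp (- p * x\<^sup>2) \<le> exp (- (real n powr \<epsilon>))" by simp
  also have "\<dots> \<le> 1 / (real n powr \<epsilon>)" using n0 by (intro exp_neg_le_inv) simp
  also have "\<dots> = real n powr (- \<epsilon>)" using n0 by (simp add: powr_minus divide_inverse)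
  finally show ?thesis .
qed

theorem lemma11:
  fixes \<mu> :: "real measure" and \<delta> \<gamma>\<^sub>0 K :: real and \<gamma> :: "nat \<Rightarrow> real"
  assumes F_prob: "prob_space \<mu>" and F_sets: "sets \<mu> = sets borel"
    and F_nonneg: "measure \<mu> {0..} = 1"
    and \<gamma>_range: "\<And>n. 0 \<le> \<gamma> n \<and> \<gamma> n \<le> real n"
    and \<gamma>_lim: "\<gamma> \<longlonglongrightarrow> \<gamma>\<^sub>0" and \<gamma>_gt: "\<gamma>\<^sub>0 > 1"
    and \<delta>_gt: "\<delta> > 1"
    and F_K: "measure \<mu> {..K} = 1"
  shows "\<exists>C3 C4. 0 < C3 \<and> 0 < C4 \<and>
    (\<forall>\<epsilon>::real. 0 \<le> \<epsilon> \<and> \<epsilon> < 1/3 \<longrightarrow>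
      (\<exists>N. \<forall>n\<ge>N. \<forall>k::nat. real k \<ge> (1 + 2*\<epsilon>) / (2 * ln \<delta>) * ln (real n) \<longrightarrow>
         cond_pr (netP \<mu> \<delta> \<gamma> n) (\<lambda>\<omega>. rho \<omega> k \<le> ereal ((2 * real k + 1) * K))
                 (\<lambda>\<omega>. gen1 \<omega> k \<noteq> {} \<and> gen2 \<omega> k \<noteq> {})
         = cond_pr (netP \<mu> \<delta> \<gamma> n) (\<lambda>\<omega>. roots_connected \<omega> k)
                 (\<lambda>\<omega>. gen1 \<omega> k \<noteq> {} \<and> gen2 \<omega> k \<noteq> {})
       \<and> cond_pr (netP \<mu> \<delta> \<gamma> n) (\<lambda>\<omega>. roots_connected \<omega> k)
                 (\<lambda>\<omega>. gen1 \<omega> k \<noteq> {} \<and> gen2 \<omega> k \<noteq> {})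
         \<ge> 1 - C3 * real n powr (- C4 * \<epsilon>)))"
proof -
  have dpos: "0 < \<delta>" using \<delta>_gt by simp
  obtain C a where C: "0 < C" and a: "0 < a"
    and MB: "\<And>k x. 1 \<le> x \<Longrightarrow> (pgf \<delta> ^^ k) (exp (-1/x)) - (pgf \<delta> ^^ k) 0 \<le> C * exp (a * (ln x - real k * ln \<delta>))"
    using main_bound[OF \<delta>_gt] by blast
  define C4 where "C4 = min (a / 2) 1"
  define q where "q = (1 - 1/\<delta>)\<^sup>2"
  have q: "0 < q" using \<delta>_gt by (simp add: q_def)
  define C3 where "C3 = (2 * exp 1 * C + 1) / q"
  have C4: "0 < C4" using a by (simp add: C4_def)
  have "0 < 2 * exp 1 * C + 1" using C by (simp add: add_pos_pos)
  then have C3: "0 < C3" using q by (simp add: C3_def)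
  obtain N0 where N0: "\<And>n. n \<ge> N0 \<Longrightarrow> 1 < \<gamma> n"
    using order_tendstoD(1)[OF \<gamma>_lim \<gamma>_gt] unfolding eventually_sequentially by blast
  have main: "cond_pr (netP \<mu> \<delta> \<gamma> n) (\<lambda>\<omega>. rho \<omega> k \<le> ereal ((2 * real k + 1) * K))
                 (\<lambda>\<omega>. gen1 \<omega> k \<noteq> {} \<and> gen2 \<omega> k \<noteq> {})
         = cond_pr (netP \<mu> \<delta> \<gamma> n) (\<lambda>\<omega>. roots_connected \<omega> k)
                 (\<lambda>\<omega>. gen1 \<omega> k \<noteq> {} \<and> gen2 \<omega> k \<noteq> {})
       \<and> cond_pr (netP \<mu> \<delta> \<gamma> n) (\<lambda>\<omega>. roots_connected \<omega> k)
                 (\<lambda>\<omega>. gen1 \<omega> k \<noteq> {} \<and> gen2 \<omega> k \<noteq> {})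
         \<ge> 1 - C3 * real n powr (- C4 * \<epsilon>)"
    if eps: "0 \<le> \<epsilon>" and n: "n \<ge> max N0 1" and k: "real k \<ge> (1 + 2*\<epsilon>) / (2 * ln \<delta>) * ln (real n)" for \<epsilon> n k
  proof -
    have n1: "1 \<le> n" using n by simp
    have n0: "0 < real n" using n1 by simp
    have g1: "1 < \<gamma> n" using N0 n by simp
    define p where "p = \<gamma> n / real n"
    have p0: "0 \<le> p" and p1: "p \<le> 1" using \<gamma>_range[of n] n0 by (auto simp: p_def)
    have pn: "1 / real n \<le> p" using g1 n0 by (simp add: p_def divide_right_mono)
    have G: "netgen (coord_dist \<mu> \<delta> p) \<delta> p" by (rule netgen_inst[OF F_prob F_sets dpos p0 p1])
    let ?P = "PiM UNIV (coord_dist \<mu> \<delta> p)"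
    have netP_eq: "netP \<mu> \<delta> \<gamma> n = ?P" by (simp add: netP_def p_def)
    have pps: "product_prob_space (coord_dist \<mu> \<delta> p)" by (rule pps_inst[OF F_prob])
    have probP: "prob_space ?P" by (rule pps_prob[OF pps])
    have spP: "space ?P = UNIV" using netgen.space_PP[OF G] .
    let ?c = "(2 * real k + 1) * K"
    let ?B = "\<lambda>\<omega>. gen1 \<omega> k \<noteq> {} \<and> gen2 \<omega> k \<noteq> {}"
    note [measurable] = netgen.B_pred[OF G] netgen.conn_pred[OF G] netgen.rho_pred[OF G]
    have pB: "Measurable.pred ?P ?B" by measurable
    have pC: "Measurable.pred ?P (\<lambda>\<omega>. roots_connected \<omega> k \<and> ?B \<omega>)" by measurable
    have pR: "Measurable.pred ?P (\<lambda>\<omega>. rho \<omega> k \<le> ereal ?c \<and> ?B \<omega>)" by measurable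
    have pBad: "Measurable.pred ?P (\<lambda>\<omega>. \<not> roots_connected \<omega> k \<and> ?B \<omega>)" by measurable
    have mB: "{\<omega>. ?B \<omega>} \<in> sets ?P" using pB by (simp add: pred_def spP)
    have mC: "{\<omega>. roots_connected \<omega> k \<and> ?B \<omega>} \<in> sets ?P" using pC by (simp add: pred_def spP)
    have mR: "{\<omega>. rho \<omega> k \<le> ereal ?c \<and> ?B \<omega>} \<in> sets ?P" using pR by (simp add: pred_def spP)
    have mBad: "{\<omega>. \<not> roots_connected \<omega> k \<and> ?B \<omega>} \<in> sets ?P" using pBad by (simp add: pred_def spP)
    have AEK: "AE x in \<mu>. x \<le> K" using prob_space.AE_prob_1[OF F_prob F_K] by simp
    have AEgood: "AE \<omega> in ?P. (\<forall>v. \<omega> (Res1 v) \<le> K) \<and> (\<forall>v. \<omega> (Res2 v) \<le> K) \<and> (\<forall>ab. \<omega> (CrossR (fst ab) (snd ab)) \<le> K)"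
    proof -
      have c: "AE \<omega> in ?P. \<omega> i \<le> K" if "coord_dist \<mu> \<delta> p i = \<mu>" for i
      proof -
        have "AE x in coord_dist \<mu> \<delta> p i. x \<le> K" unfolding that by (rule AEK)
        then show ?thesis using product_prob_space.AE_component[OF pps, of i UNIV "\<lambda>x. x \<le> K"] by simp
      qed
      show ?thesis
        by (simp only: AE_conj_iff AE_all_countable) (auto intro!: c simp: coord_dist_def)
    qed
    have num_eq: "measure ?P {\<omega>. rho \<omega> k \<le> ereal ?c \<and> ?B \<omega>} = measure ?P {\<omega>. roots_connected \<omega> k \<and> ?B \<omega>}"
    proof (rule measure_eq_AE[OF _ mR mC])
      show "AE \<omega> in ?P. (\<omega> \<in> {\<omega>. rho \<omega> k \<le> ereal ?c \<and> ?B \<omega>}) = (\<omega> \<in> {\<omega>. roots_connected \<omega> k \<and> ?B \<omega>})"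
        using AEgood
      proof (rule AE_mp, intro AE_I2 impI)
        fix \<omega> assume good: "(\<forall>v. \<omega> (Res1 v) \<le> K) \<and> (\<forall>v. \<omega> (Res2 v) \<le> K) \<and> (\<forall>ab. \<omega> (CrossR (fst ab) (snd ab)) \<le> K)"
        have "rho \<omega> k \<le> ereal ?c \<longleftrightarrow> roots_connected \<omega> k"
        proof
          assume "rho \<omega> k \<le> ereal ?c" then show "roots_connected \<omega> k" by (rule rho_conn)
        next
          assume "roots_connected \<omega> k"
          then obtain a b where "a \<in> gen1 \<omega> k" "b \<in> gen2 \<omega> k" "\<omega> (CrossB a b) = 1" using conn_cross by blast
          then show "rho \<omega> k \<le> ereal ?c" by (rule rho_bound) (use good in auto)
        qed
        then show "(\<omega> \<in> {\<omega>. rho \<omega> k \<le> ereal ?c \<and> ?B \<omega>}) = (\<omega> \<in> {\<omega>. roots_connected \<omega> k \<and> ?B \<omega>})" by simp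
      qed
    qed
    have eq_part: "cond_pr (netP \<mu> \<delta> \<gamma> n) (\<lambda>\<omega>. rho \<omega> k \<le> ereal ?c) ?B = cond_pr (netP \<mu> \<delta> \<gamma> n) (\<lambda>\<omega>. roots_connected \<omega> k) ?B"
      unfolding cond_pr_def netP_eq spP using num_eq by simp
    define x where "x = real n powr ((1 + \<epsilon>) / 2)"
    have C4a: "C4 * \<epsilon> \<le> a / 2 * \<epsilon>" using eps by (intro mult_right_mono) (auto simp: C4_def)
    have C41: "C4 * \<epsilon> \<le> \<epsilon>" using eps mult_right_mono[of C4 1 \<epsilon>] by (auto simp: C4_def)
    have x1: "1 \<le> x" using n1 eps by (simp add: x_def ge_one_powr_ge_zero)
    have PB: "measure ?P {\<omega>. ?B \<omega>} \<ge> q" unfolding q_def by (rule netgen.prob_B[OF G \<delta>_gt])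
    have bad: "measure ?P {\<omega>. \<not> roots_connected \<omega> k \<and> ?B \<omega>} \<le> (2 * exp 1 * C + 1) * real n powr (- C4 * \<epsilon>)"
    proof -
      have "measure ?P {\<omega>. \<not> roots_connected \<omega> k \<and> ?B \<omega>}
          \<le> 2 * (exp 1 * ((pgf \<delta> ^^ k) (exp (-1/x)) - (pgf \<delta> ^^ k) 0)) + exp (- p * x\<^sup>2)"
        using netgen.prob_bad[OF G \<delta>_gt, of x k] x1 by simp
      also have "\<dots> \<le> 2 * (exp 1 * (C * real n powr (- C4 * \<epsilon>))) + real n powr (- C4 * \<epsilon>)"
      proof (intro add_mono mult_left_mono)
        have "(pgf \<delta> ^^ k) (exp (-1/x)) - (pgf \<delta> ^^ k) 0 \<le> C * exp (a * (ln x - real k * ln \<delta>))" by (rule MB[OF x1])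
        also have "\<dots> \<le> C * real n powr (- (a / 2 * \<epsilon>))"
          using final_analysis[OF n1 eps a \<delta>_gt k x_def] C by (intro mult_left_mono) auto
        also have "\<dots> \<le> C * real n powr (- C4 * \<epsilon>)"
          using C n1 C4a by (intro mult_left_mono powr_mono) auto
        finally show "(pgf \<delta> ^^ k) (exp (-1/x)) - (pgf \<delta> ^^ k) 0 \<le> C * real n powr (- C4 * \<epsilon>)" .
        have "exp (- p * x\<^sup>2) \<le> real n powr (- \<epsilon>)" by (rule final_cross[OF n1 eps pn x_def])
        also have "\<dots> \<le> real n powr (- C4 * \<epsilon>)"
          using n1 C41 by (intro powr_mono) auto
        finally show "exp (- p * x\<^sup>2) \<le> real n powr (- C4 * \<epsilon>)" .
      qed auto
      also have "\<dots> = (2 * exp 1 * C + 1) * real n powr (- C4 * \<epsilon>)" by (simp add: algebra_simps)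
      finally show ?thesis .
    qed
    have split: "measure ?P {\<omega>. roots_connected \<omega> k \<and> ?B \<omega>} = measure ?P {\<omega>. ?B \<omega>} - measure ?P {\<omega>. \<not> roots_connected \<omega> k \<and> ?B \<omega>}"
    proof -
      have "{\<omega>. roots_connected \<omega> k \<and> ?B \<omega>} = {\<omega>. ?B \<omega>} - {\<omega>. \<not> roots_connected \<omega> k \<and> ?B \<omega>}" by auto
      then show ?thesis using finite_measure.finite_measure_Diff[OF prob_space.finite_measure[OF probP] mB mBad] by auto
    qed
    have "1 - C3 * real n powr (- C4 * \<epsilon>) \<le> 1 - measure ?P {\<omega>. \<not> roots_connected \<omega> k \<and> ?B \<omega>} / measure ?P {\<omega>. ?B \<omega>}"
    proof -
      have "measure ?P {\<omega>. \<not> roots_connected \<omega> k \<and> ?B \<omega>} / measure ?P {\<omega>. ?B \<omega>}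
          \<le> (2 * exp 1 * C + 1) * real n powr (- C4 * \<epsilon>) / q"
      proof (rule frac_le)
        show "0 \<le> (2 * exp 1 * C + 1) * real n powr (- C4 * \<epsilon>)" using C by (intro mult_nonneg_nonneg) auto
      qed (use bad PB q in auto)
      then show ?thesis by (simp add: C3_def)
    qed
    also have "\<dots> = cond_pr (netP \<mu> \<delta> \<gamma> n) (\<lambda>\<omega>. roots_connected \<omega> k) ?B"
    proof -
      have "cond_pr (netP \<mu> \<delta> \<gamma> n) (\<lambda>\<omega>. roots_connected \<omega> k) ?B
          = measure ?P {\<omega>. roots_connected \<omega> k \<and> ?B \<omega>} / measure ?P {\<omega>. ?B \<omega>}"
        unfolding cond_pr_def netP_eq spP by simp
      also have "\<dots> = 1 - measure ?P {\<omega>. \<not> roots_connected \<omega> k \<and> ?B \<omega>} / measure ?P {\<omega>. ?B \<omega>}"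
        unfolding split using PB q by (simp add: diff_divide_distrib)
      finally show ?thesis by simp
    qed
    finally show ?thesis using eq_part by simp
  qed
  show ?thesis
    by (rule exI[of _ C3], rule exI[of _ C4]) (use C3 C4 main in blast)
qed


end
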